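(* Let $K\in\{-1,+1\}$ and consider the space form $\mathbb{R}^{n+1}(K)$ modelled as $S^n\times[0,a)$ with metric $d\rho^2+f(\rho)e$, where $e$ is the round metric on the unit sphere $S^n$ and $a=\infty$, $f=\sinh^2\rho$ if $K=-1$, while $a=\pi/2$, $f=\sin^2\rho$ if $K=+1$. Let $t(\rho)=\tanh\rho$ if $K=-1$ and $t(\rho)=\tan\rho$ if $K=+1$. Let $1\le m\le n$, let $z\in C^2(S^n)$ with $0<z<a$ be $m$-admissible, put $v(u)=t(z(u)/2)$, and let $s>0$ be a constant with $sv(u)<1$ for all $u\in S^n$. Define $$A(sv)=\frac{1+Ks^2v^2}{s(1+Kv^2)},\qquad B(sv)=K\frac{(1-s^2)v^2}{s(1+Kv^2)W(v)},\qquad W(v)=\sqrt{v^2+|\nabla' v|^2}.$$ Then $$S_m(\lambda(sv))=A^m(sv)S_m(\lambda(v))+\sum_{j=0}^{m-1}c(n,m,j)A^j(sv)B^{m-j}(sv)S_j(\lambda(v)),$$ where $c(n,m,j)$ are positive coefficients depending only on $n,m,j$. Furthermore, if $K=-1$ and $s\ge1$, or if $K=+1$ and $s\le 1$, then $$S_m(\lambda(sv(u)))\ge A^m(sv(u))S_m(\lambda(v(u)))\quad\text{for all }u\in S^n,$$ and in particular, for these choices of $s$, the function $sv$ is $m$-admissible (i.e. the radial graph of $2t^{-1}(sv)$ is $m$-admissible).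
   Context: $\nabla'$ denotes the Levi-Civita connection/gradient of $e$ on $S^n$ and $|\cdot|$ the $e$-norm. For a positive $w\in C^2(S^n)$ with $w<1$, $\lambda(w(u))=(\lambda_1,\dots,\lambda_n)$ denotes the principal curvatures at $(u,2t^{-1}(w(u)))$ of the radial graph $\{(u,2t^{-1}(w(u))):u\in S^n\}$ in $\mathbb{R}^{n+1}(K)$, computed with respect to the inner normal (pointing toward decreasing $\rho$, so geodesic spheres $\rho=\text{const}$ have positive principal curvatures); similarly $\lambda(z(u))$ for the radial graph $\{(u,z(u))\}$. $S_j(\lambda)=\sum_{i_1<\dots<i_j}\lambda_{i_1}\cdots\lambda_{i_j}$ for $j\ge1$ and $S_0=1$; $H_m=\binom{n}{m}^{-1}S_m$. $\Gamma_m$ is the connected component of $\{\lambda\in\mathbb{R}^n:H_m(\lambda)>0\}$ containing the positive cone. A positive $z\in C^2(S^n)$ is $m$-admissible if $\lambda(z(u))\in\Gamma_m$ for all $u$; $v$ (or $sv$) is called $m$-admissible if the corresponding radial graph is. *)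

theory Defs
  imports "HOL-Analysis.Analysis"
begin

text \<open>S^n is the unit sphere of R^{n+1}, modelled as real^'n with CARD('n) = n+1.
  The metric is d rho^2 + phi(rho)^2 e with phi = sinh (K=-1) or sin (K=1),
  so f = phi^2.\<close>

definition sphere_n :: "(real^'n) set" where
  "sphere_n = {u. norm u = 1}"

definition phi :: "real \<Rightarrow> real \<Rightarrow> real" where
  "phi K r = (if K = -1 then sinh r else sin r)"

definition dphi :: "real \<Rightarrow> real \<Rightarrow> real" where
  "dphi K r = (if K = -1 then cosh r else cos r)"

definition tK :: "real \<Rightarrow> real \<Rightarrow> real" where
  "tK K r = (if K = -1 then tanh r else tan r)"

definition tK_inv :: "real \<Rightarrow> real \<Rightarrow> real" where
  "tK_inv K w = (if K = -1 then artanh w else arctan w)"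

definition hext :: "(real^'n \<Rightarrow> real) \<Rightarrow> real^'n \<Rightarrow> real" where
  "hext z x = z (x /\<^sub>R norm x)"

definition egrad :: "(real^'n \<Rightarrow> real) \<Rightarrow> real^'n \<Rightarrow> real^'n" where
  "egrad F x = (\<chi> i. frechet_derivative F (at x) (axis i 1))"

definition ehess :: "(real^'n \<Rightarrow> real) \<Rightarrow> real^'n \<Rightarrow> real^'n^'n" where
  "ehess F x = (\<chi> i j. frechet_derivative (\<lambda>y. egrad F y $ i) (at x) (axis j 1))"

text \<open>z in C^2(S^n): its degree-0 homogeneous extension is C^2 on R^{n+1} minus 0.\<close>
definition C2_sphere :: "(real^'n \<Rightarrow> real) \<Rightarrow> bool" where
  "C2_sphere z \<longleftrightarrow>
     (\<forall>x. x \<noteq> 0 \<longrightarrow> hext z differentiable (at x) \<and>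
          (\<forall>i. (\<lambda>y. egrad (hext z) y $ i) differentiable (at x))) \<and>
     continuous_on (- {0}) (ehess (hext z))"

text \<open>Spherical gradient nabla' z and covariant Hessian nabla'^2 z at u in S^n
  (as a bilinear form on T_u S^n = u-perp, written as a matrix).\<close>
definition sgrad :: "(real^'n \<Rightarrow> real) \<Rightarrow> real^'n \<Rightarrow> real^'n" where
  "sgrad z u = egrad (hext z) u"

definition outer :: "real^'n \<Rightarrow> real^'n \<Rightarrow> real^'n^'n" where
  "outer a b = (\<chi> i j. a $ i * b $ j)"

definition tproj :: "real^'n \<Rightarrow> real^'n^'n" where
  "tproj u = mat 1 - outer u u"

definition shess :: "(real^'n \<Rightarrow> real) \<Rightarrow> real^'n \<Rightarrow> real^'n^'n" where
  "shess z u = tproj u ** ehess (hext z) u ** tproj u"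

text \<open>Induced metric g(X,Y) = phi^2 e(X,Y) + X z Y z and second fundamental form
  (w.r.t. the normal for which geodesic spheres have positive curvatures)
  h(X,Y) = (phi phi' e(X,Y) - nabla'^2 z(X,Y) + 2 (phi'/phi) X z Y z) / sqrt(1 + |nabla' z|^2/phi^2),
  both as bilinear forms on T_u S^n.\<close>

definition metric_mat :: "real \<Rightarrow> (real^'n \<Rightarrow> real) \<Rightarrow> real^'n \<Rightarrow> real^'n^'n" where
  "metric_mat K z u =
     (phi K (z u))\<^sup>2 *\<^sub>R tproj u + outer (sgrad z u) (sgrad z u)"

definition sff_mat :: "real \<Rightarrow> (real^'n \<Rightarrow> real) \<Rightarrow> real^'n \<Rightarrow> real^'n^'n" where
  "sff_mat K z u =
     (let r = z u; p = phi K r; dp = dphi K r; g = sgrad z u;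
          Wb = sqrt (1 + (g \<bullet> g) / p\<^sup>2)
      in (1 / Wb) *\<^sub>R ((p * dp) *\<^sub>R tproj u - shess z u + (2 * dp / p) *\<^sub>R outer g g))"

text \<open>Principal curvature n-tuples (lambda_0,...,lambda_{n-1}, padded by zeros):
  eigenvalues of h relative to g on T_u S^n, given by a basis of eigenvectors.\<close>
definition pcurv :: "real \<Rightarrow> nat \<Rightarrow> (real^'n \<Rightarrow> real) \<Rightarrow> real^'n \<Rightarrow> (nat \<Rightarrow> real) set" where
  "pcurv K n z u = {lam. (\<forall>i\<ge>n. lam i = 0) \<and>
     (\<exists>b :: nat \<Rightarrow> real^'n. inj_on b {..<n} \<and> independent (b ` {..<n}) \<and>
        (\<forall>i<n. b i \<bullet> u = 0 \<and>
               sff_mat K z u *v b i = lam i *\<^sub>R (metric_mat K z u *v b i)))}"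

definition esym :: "nat \<Rightarrow> nat \<Rightarrow> (nat \<Rightarrow> real) \<Rightarrow> real" where
  "esym n j lam = (\<Sum>I\<in>{I. I \<subseteq> {..<n} \<and> card I = j}. \<Prod>i\<in>I. lam i)"

definition Hm :: "nat \<Rightarrow> nat \<Rightarrow> (nat \<Rightarrow> real) \<Rightarrow> real" where
  "Hm n m lam = esym n m lam / real (n choose m)"

definition Rn :: "nat \<Rightarrow> (nat \<Rightarrow> real) set" where
  "Rn n = {lam. \<forall>i\<ge>n. lam i = 0}"

definition pos_cone :: "nat \<Rightarrow> (nat \<Rightarrow> real) set" where
  "pos_cone n = {lam \<in> Rn n. \<forall>i<n. lam i > 0}"

definition Gamma :: "nat \<Rightarrow> nat \<Rightarrow> (nat \<Rightarrow> real) set" where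
  "Gamma n m = (\<Union>p\<in>pos_cone n.
       connected_component_set {lam \<in> Rn n. Hm n m lam > 0} p)"

definition curvS :: "real \<Rightarrow> nat \<Rightarrow> nat \<Rightarrow> (real^'n \<Rightarrow> real) \<Rightarrow> real^'n \<Rightarrow> real" where
  "curvS K n j z u = esym n j (SOME lam. lam \<in> pcurv K n z u)"

definition admissible :: "real \<Rightarrow> nat \<Rightarrow> nat \<Rightarrow> (real^'n \<Rightarrow> real) \<Rightarrow> bool" where
  "admissible K n m z \<longleftrightarrow> (\<forall>u\<in>sphere_n. \<exists>lam \<in> pcurv K n z u. lam \<in> Gamma n m)"

definition zof :: "real \<Rightarrow> (real^'n \<Rightarrow> real) \<Rightarrow> real^'n \<Rightarrow> real" where
  "zof K w = (\<lambda>u. 2 * tK_inv K (w u))"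

definition Wv :: "(real^'n \<Rightarrow> real) \<Rightarrow> real^'n \<Rightarrow> real" where
  "Wv v u = sqrt ((v u)\<^sup>2 + (norm (sgrad v u))\<^sup>2)"

definition Acoef :: "real \<Rightarrow> real \<Rightarrow> (real^'n \<Rightarrow> real) \<Rightarrow> real^'n \<Rightarrow> real" where
  "Acoef K s v u = (1 + K * s\<^sup>2 * (v u)\<^sup>2) / (s * (1 + K * (v u)\<^sup>2))"

definition Bcoef :: "real \<Rightarrow> real \<Rightarrow> (real^'n \<Rightarrow> real) \<Rightarrow> real^'n \<Rightarrow> real" where
  "Bcoef K s v u = K * ((1 - s\<^sup>2) * (v u)\<^sup>2) / (s * (1 + K * (v u)\<^sup>2) * Wv v u)"

end

theory Submission
  imports Defs "HOL-Computational_Algebra.Polynomial"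
begin

abbreviation Ssets :: "nat \<Rightarrow> nat \<Rightarrow> nat set set" where
  "Ssets n j \<equiv> {I. I \<subseteq> {..<n} \<and> card I = j}"

lemma finite_Ssets: "finite (Ssets n j)"
  by (rule finite_subset[of _ "Pow {..<n}"]) auto

lemma count_supersets:
  assumes J: "J \<subseteq> {..<n}" "card J \<le> m"
  shows "card {I \<in> Ssets n m. J \<subseteq> I} = (n - card J) choose (m - card J)"
proof -
  have fJ: "finite J" using J finite_subset by blast
  have "bij_betw (\<lambda>I. I - J) {I \<in> Ssets n m. J \<subseteq> I} {K. K \<subseteq> {..<n} - J \<and> card K = m - card J}"
  proof (rule bij_betw_byWitness[where f'="\<lambda>K. K \<union> J"])
    show "\<forall>a\<in>{I \<in> Ssets n m. J \<subseteq> I}. a - J \<union> J = a" by auto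
    show "\<forall>a'\<in>{K. K \<subseteq> {..<n} - J \<and> card K = m - card J}. a' \<union> J - J = a'" by auto
    show "(\<lambda>I. I - J) ` {I \<in> Ssets n m. J \<subseteq> I} \<subseteq> {K. K \<subseteq> {..<n} - J \<and> card K = m - card J}"
    proof safe
      fix I assume "I \<subseteq> {..<n}" "J \<subseteq> I" "m = card I"
      then show "card (I - J) = card I - card J"
        using fJ by (meson card_Diff_subset finite_lessThan finite_subset)
    qed auto
    show "(\<lambda>K. K \<union> J) ` {K. K \<subseteq> {..<n} - J \<and> card K = m - card J} \<subseteq> {I \<in> Ssets n m. J \<subseteq> I}"
    proof
      fix X assume "X \<in> (\<lambda>K. K \<union> J) ` {K. K \<subseteq> {..<n} - J \<and> card K = m - card J}"
      then obtain K where K: "K \<subseteq> {..<n} - J" "card K = m - card J" and X: "X = K \<union> J" by auto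
      have fK: "finite K" using K finite_subset by blast
      have "card (K \<union> J) = card K + card J"
        using K fK fJ by (subst card_Un_disjoint) auto
      then show "X \<in> {I \<in> Ssets n m. J \<subseteq> I}" using K J X by auto
    qed
  qed
  then have "card {I \<in> Ssets n m. J \<subseteq> I} = card {K. K \<subseteq> {..<n} - J \<and> card K = m - card J}"
    by (rule bij_betw_same_card)
  also have "\<dots> = card ({..<n} - J) choose (m - card J)"
    by (rule n_subsets) auto
  also have "card ({..<n} - J) = n - card J"
    using J fJ by (simp add: card_Diff_subset)
  finally show ?thesis .
qed

lemma esym_shift:
  fixes A B :: real
  shows "esym n m (\<lambda>i. A * f i + B) =
     (\<Sum>j\<le>m. real ((n - j) choose (m - j)) * A ^ j * B ^ (m - j) * esym n j f)"
proof -
  define T where "T = {J. J \<subseteq> {..<n} \<and> card J \<le> m}"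
  define h where "h J = A ^ card J * (\<Prod>i\<in>J. f i) * B ^ (m - card J)" for J :: "nat set"
  have fT: "finite T" unfolding T_def by (rule finite_subset[of _ "Pow {..<n}"]) auto
  have "esym n m (\<lambda>i. A * f i + B) = (\<Sum>I\<in>Ssets n m. \<Sum>J\<in>Pow I. h J)"
    unfolding esym_def
  proof (rule sum.cong[OF refl])
    fix I assume I: "I \<in> Ssets n m"
    have fI: "finite I" using I finite_subset by blast
    have "(\<Prod>i\<in>I. A * f i + B) = (\<Sum>J\<in>Pow I. (\<Prod>i\<in>J. A * f i) * (\<Prod>i\<in>I - J. B))"
      by (rule prod_add[OF fI])
    also have "\<dots> = (\<Sum>J\<in>Pow I. h J)"
    proof (rule sum.cong[OF refl])
      fix J assume "J \<in> Pow I"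
      then have "card (I - J) = m - card J" using I fI
        by (simp add: card_Diff_subset finite_subset)
      then show "(\<Prod>i\<in>J. A * f i) * (\<Prod>i\<in>I - J. B) = h J"
        by (simp add: h_def prod.distrib)
    qed
    finally show "(\<Prod>i\<in>I. A * f i + B) = (\<Sum>J\<in>Pow I. h J)" .
  qed
  also have "\<dots> = (\<Sum>I\<in>Ssets n m. \<Sum>J\<in>T. if J \<subseteq> I then h J else 0)"
  proof (rule sum.cong[OF refl])
    fix I assume I: "I \<in> Ssets n m"
    have fI: "finite I" using I finite_subset by blast
    have "Pow I = {J \<in> T. J \<subseteq> I}" using I fI unfolding T_def
      by (auto intro: card_mono)
    then show "(\<Sum>J\<in>Pow I. h J) = (\<Sum>J\<in>T. if J \<subseteq> I then h J else 0)"
      using fT by (simp add: sum.inter_filter)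
  qed
  also have "\<dots> = (\<Sum>J\<in>T. \<Sum>I\<in>Ssets n m. if J \<subseteq> I then h J else 0)"
    by (rule sum.swap)
  also have "\<dots> = (\<Sum>J\<in>T. real ((n - card J) choose (m - card J)) * h J)"
  proof (rule sum.cong[OF refl])
    fix J assume J: "J \<in> T"
    have "(\<Sum>I\<in>Ssets n m. if J \<subseteq> I then h J else 0) = (\<Sum>I\<in>{I \<in> Ssets n m. J \<subseteq> I}. h J)"
      by (rule sum.inter_filter[OF finite_Ssets, symmetric])
    also have "\<dots> = real (card {I \<in> Ssets n m. J \<subseteq> I}) * h J" by simp
    also have "card {I \<in> Ssets n m. J \<subseteq> I} = (n - card J) choose (m - card J)"
      using J unfolding T_def by (intro count_supersets) auto
    finally show "(\<Sum>I\<in>Ssets n m. if J \<subseteq> I then h J else 0) = real ((n - card J) choose (m - card J)) * h J" .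
  qed
  also have "\<dots> = (\<Sum>j\<le>m. \<Sum>J\<in>{J\<in>T. card J = j}. real ((n - card J) choose (m - card J)) * h J)"
    by (rule sum.group[symmetric]) (use fT in \<open>auto simp: T_def\<close>)
  also have "\<dots> = (\<Sum>j\<le>m. real ((n - j) choose (m - j)) * A ^ j * B ^ (m - j) * esym n j f)"
  proof (rule sum.cong[OF refl])
    fix j assume j: "j \<in> {..m}"
    have "{J\<in>T. card J = j} = Ssets n j" using j by (auto simp: T_def)
    then show "(\<Sum>J\<in>{J\<in>T. card J = j}. real ((n - card J) choose (m - card J)) * h J) =
         real ((n - j) choose (m - j)) * A ^ j * B ^ (m - j) * esym n j f"
      by (simp add: esym_def h_def sum_distrib_left sum_distrib_right mult_ac)
  qed
  finally show ?thesis .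
qed

lemma esym_big: "j > n \<Longrightarrow> esym n j f = 0"
proof -
  assume "j > n"
  then have e: "Ssets n j = {}"
    by (auto dest: card_mono[OF finite_lessThan])
  show ?thesis unfolding esym_def e by simp
qed

lemma vieta:
  fixes f :: "nat \<Rightarrow> real"
  assumes "k \<le> n"
  shows "coeff (\<Prod>i<n. [:f i, 1:]) k = esym n (n - k) f"
proof -
  have "(\<Prod>i<n. [:f i, 1:]) = (\<Prod>i<n. [:f i:] + [:0, 1:])" by simp
  also have "\<dots> = (\<Sum>J\<in>Pow {..<n}. (\<Prod>i\<in>J. [:f i:]) * (\<Prod>i\<in>{..<n} - J. [:0, 1:]))"
    by (rule prod_add) simp
  also have "\<dots> = (\<Sum>J\<in>Pow {..<n}. monom (\<Prod>i\<in>J. f i) (n - card J))"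
  proof (rule sum.cong[OF refl])
    fix J assume "J \<in> Pow {..<n}"
    then have "card ({..<n} - J) = n - card J"
      by (simp add: card_Diff_subset finite_subset)
    then show "(\<Prod>i\<in>J. [:f i:]) * (\<Prod>i\<in>{..<n} - J. [:0, 1:]) = monom (\<Prod>i\<in>J. f i) (n - card J)"
      by (simp add: prod_to_poly monom_altdef)
  qed
  finally have "coeff (\<Prod>i<n. [:f i, 1:]) k = (\<Sum>J\<in>Pow {..<n}. if n - card J = k then (\<Prod>i\<in>J. f i) else 0)"
    by (simp add: coeff_sum)
  also have "\<dots> = (\<Sum>J\<in>{J \<in> Pow {..<n}. n - card J = k}. (\<Prod>i\<in>J. f i))"
    by (rule sum.inter_filter[symmetric]) simp
  also have "{J \<in> Pow {..<n}. n - card J = k} = Ssets n (n - k)"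
  proof -
    have "card J \<le> n" if "J \<subseteq> {..<n}" for J
      using card_mono[OF finite_lessThan that] by simp
    then show ?thesis using assms by auto
  qed
  finally show ?thesis by (simp add: esym_def)
qed

lemma esym_mset_eq:
  fixes lam lam' :: "nat \<Rightarrow> real"
  assumes "mset (map lam [0..<n]) = mset (map lam' [0..<n])"
  shows "esym n j lam = esym n j lam'"
proof (cases "j \<le> n")
  case True
  have eq: "(\<Prod>i<n. [:g i, 1:]) = (\<Prod>x\<in>#mset (map g [0..<n]). [:x, 1:])" for g :: "nat \<Rightarrow> real"
  proof -
    have "(\<Prod>i<n. [:g i, 1:]) = (\<Prod>i\<in>set [0..<n]. [:g i, 1:])" by (simp add: atLeast0LessThan)
    also have "\<dots> = prod_list (map (\<lambda>i. [:g i, 1:]) [0..<n])"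
      by (rule prod.distinct_set_conv_list) simp
    also have "\<dots> = (\<Prod>x\<in>#mset (map g [0..<n]). [:x, 1:])"
      by (simp add: prod_mset_prod_list[symmetric] multiset.map_comp o_def)
    finally show ?thesis .
  qed
  have "esym n j lam = coeff (\<Prod>i<n. [:lam i, 1:]) (n - j)"
    using True by (simp add: vieta)
  also have "\<dots> = coeff (\<Prod>i<n. [:lam' i, 1:]) (n - j)"
    by (simp only: eq assms)
  also have "\<dots> = esym n j lam'"
    using True by (simp add: vieta)
  finally show ?thesis .
qed (simp add: esym_big)

lemma esym_count_eq:
  fixes lam lam' :: "nat \<Rightarrow> real"
  assumes "\<And>c. card {i. i < n \<and> lam i = c} = card {i. i < n \<and> lam' i = c}"
  shows "esym n j lam = esym n j lam'"
proof (rule esym_mset_eq, rule multiset_eqI)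
  fix c
  have "count (mset (map g [0..<n])) c = card {i. i < n \<and> g i = c}" for g :: "nat \<Rightarrow> real"
    unfolding count_mset count_list_eq_length_filter length_filter_conv_card by (auto intro!: arg_cong[where f=card])
  then show "count (mset (map lam [0..<n])) c = count (mset (map lam' [0..<n])) c"
    using assms by simp
qed

definition rr :: "real poly \<Rightarrow> bool" where
  "rr p \<longleftrightarrow> p \<noteq> 0 \<and> size (proots p) = degree p"

lemma rolle_points:
  fixes p :: "real poly"
  assumes "finite R" "R \<noteq> {}" "\<forall>x\<in>R. poly p x = 0"
  shows "\<exists>Z. finite Z \<and> Z \<inter> R = {} \<and> (\<forall>z\<in>Z. poly (pderiv p) z = 0 \<and> z < Max R) \<and> card R \<le> card Z + 1"
  using assms
proof (induction R rule: finite_linorder_max_induct)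
  case empty
  then show ?case by simp
next
  case (insert b A)
  show ?case
  proof (cases "A = {}")
    case True
    then show ?thesis by (intro exI[of _ "{}"]) auto
  next
    case False
    from insert False obtain Z where Z: "finite Z" "Z \<inter> A = {}"
      "\<forall>z\<in>Z. poly (pderiv p) z = 0 \<and> z < Max A" "card A \<le> card Z + 1" by auto
    define a where "a = Max A"
    have aA: "a \<in> A" using False insert.hyps(1) by (simp add: a_def)
    have ab: "a < b" using insert.hyps aA by auto
    have pa: "poly p a = 0" "poly p b = 0" using insert.prems aA by auto
    obtain xi where xi: "a < xi" "xi < b" "poly p b - poly p a = (b - a) * poly (pderiv p) xi"
      using poly_MVT[OF ab] by blast
    have pxi: "poly (pderiv p) xi = 0" using xi pa ab by simp
    have bA: "b \<notin> A" using insert.hyps(2) by auto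
    have "Max A < b" using ab a_def by simp
    then have MaxI: "Max (insert b A) = b"
      using Max_insert[OF insert.hyps(1) False, of b] by (simp add: max_absorb1 less_imp_le)
    have leA: "x \<le> a" if "x \<in> A" for x using that insert.hyps(1) by (simp add: a_def)
    have xiZ: "xi \<notin> Z" using Z(3) xi(1) a_def by fastforce
    have "insert xi Z \<inter> insert b A = {}"
      using Z(2,3) xi leA ab a_def by fastforce
    moreover have "\<forall>z\<in>insert xi Z. poly (pderiv p) z = 0 \<and> z < Max (insert b A)"
      using Z(3) pxi xi ab a_def MaxI by auto
    moreover have "card (insert b A) \<le> card (insert xi Z) + 1"
      using Z(1,4) xiZ insert.hyps(1) bA by simp
    ultimately show ?thesis using Z(1) by (intro exI[of _ "insert xi Z"]) auto
  qed
qed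

lemma rr_pderiv:
  fixes p :: "real poly"
  assumes "rr p" "degree p \<ge> 1"
  shows "rr (pderiv p)"
proof -
  define R where "R = {x. poly p x = 0}"
  have p0: "p \<noteq> 0" and sz: "size (proots p) = degree p" using assms(1) by (auto simp: rr_def)
  have fR: "finite R" unfolding R_def using poly_roots_finite[OF p0] .
  have "proots p \<noteq> {#}" using sz assms(2) by auto
  then obtain r where "r \<in># proots p" by blast
  then have "r \<in> R" using p0 by (simp add: R_def)
  then have RN: "R \<noteq> {}" by blast
  have "\<forall>x\<in>R. poly p x = 0" by (simp add: R_def)
  from rolle_points[where p=p, OF fR RN this] obtain Z where Z: "finite Z" "Z \<inter> R = {}"
    "\<forall>z\<in>Z. poly (pderiv p) z = 0 \<and> z < Max R" "card R \<le> card Z + 1"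
    by blast
  have d0: "pderiv p \<noteq> 0" using assms(2) pderiv_eq_0_iff[of p] by simp
  have sub1: "mset_set R \<subseteq># proots p"
  proof (rule mset_subset_eqI)
    fix x show "count (mset_set R) x \<le> count (proots p) x"
      using fR p0 order_root[of p x] by (cases "x \<in> R") (auto simp: R_def)
  qed
  define M where "M = (proots p - mset_set R) + mset_set Z"
  have cM: "count M x = count (proots p) x - count (mset_set R) x + count (mset_set Z) x" for x
    by (simp add: M_def)
  have "M \<subseteq># proots (pderiv p)"
  proof (rule mset_subset_eqI)
    fix x
    show "count M x \<le> count (proots (pderiv p)) x"
    proof (cases "x \<in> R")
      case True
      then have "x \<notin> Z" using Z(2) by auto
      moreover have "order x p = Suc (order x (pderiv p))"
        using True p0 by (intro order_pderiv) (auto simp: R_def)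
      ultimately show ?thesis unfolding cM using True fR Z(1) p0 d0 by simp
    next
      case False
      then have o0: "order x p = 0" using p0 order_root[of p x] by (simp add: R_def)
      show ?thesis
      proof (cases "x \<in> Z")
        case True
        then have "poly (pderiv p) x = 0" using Z(3) by auto
        then have "order x (pderiv p) \<noteq> 0" using d0 order_root[of "pderiv p" x] by simp
        then show ?thesis unfolding cM using True False fR Z(1) p0 d0 o0 by simp
      next
        case False
        then show ?thesis unfolding cM using \<open>x \<notin> R\<close> fR Z(1) p0 d0 o0 by simp
      qed
    qed
  qed
  then have "size M \<le> size (proots (pderiv p))" by (rule size_mset_mono)
  moreover have "size M = degree p - card R + card Z"
    using size_Diff_submset[OF sub1] sz by (simp add: M_def)
  moreover have "card R \<le> degree p"
    using size_mset_mono[OF sub1] sz by simp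
  moreover have "size (proots (pderiv p)) \<le> degree (pderiv p)" by (rule size_proots_le)
  moreover have "degree (pderiv p) = degree p - 1" by (rule degree_pderiv)
  ultimately show ?thesis using Z(4) d0 by (simp add: rr_def)
qed

lemma rr_pderiv_iter:
  fixes p :: "real poly"
  assumes "rr p" "k \<le> degree p"
  shows "rr ((pderiv ^^ k) p) \<and> degree ((pderiv ^^ k) p) = degree p - k"
  using assms(2)
proof (induction k)
  case 0
  then show ?case using assms(1) by simp
next
  case (Suc k)
  then have IH: "rr ((pderiv ^^ k) p)" "degree ((pderiv ^^ k) p) = degree p - k" by auto
  have "rr (pderiv ((pderiv ^^ k) p))"
    using IH Suc.prems by (intro rr_pderiv) auto
  then show ?case using IH by (simp add: degree_pderiv)
qed

lemma coeff_pderiv_iter: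
  fixes p :: "real poly"
  shows "coeff ((pderiv ^^ k) p) i = (fact (i + k) / fact i) * coeff p (i + k)"
proof (induction k arbitrary: i)
  case 0
  then show ?case by simp
next
  case (Suc k)
  have "coeff ((pderiv ^^ Suc k) p) i = real (Suc i) * coeff ((pderiv ^^ k) p) (Suc i)"
    by (simp add: coeff_pderiv)
  also have "\<dots> = real (Suc i) * ((fact (Suc i + k) / fact (Suc i)) * coeff p (Suc i + k))"
    by (simp add: Suc.IH)
  also have "\<dots> = (fact (i + Suc k) / fact i) * coeff p (i + Suc k)"
    by (simp add: fact_Suc field_simps del: of_nat_Suc)
  finally show ?case .
qed

lemma rr_neg_pos_coeffs:
  fixes q :: "real poly"
  assumes "rr q" "\<forall>x. poly q x = 0 \<longrightarrow> x < 0" "lead_coeff q > 0" "i \<le> degree q"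
  shows "coeff q i > 0"
  using assms
proof (induction "degree q" arbitrary: q i)
  case 0
  then show ?case by simp
next
  case (Suc d)
  have q0: "q \<noteq> 0" and sz: "size (proots q) = degree q" using Suc.prems(1) by (auto simp: rr_def)
  have "proots q \<noteq> {#}" using sz Suc.hyps(2) by auto
  then obtain a where "a \<in># proots q" by blast
  then have pa: "poly q a = 0" using q0 by simp
  then have a0: "a < 0" using Suc.prems(2) by auto
  obtain q1 where q1: "q = [:-a, 1:] * q1"
    using pa by (auto simp: poly_eq_0_iff_dvd elim: dvdE)
  have q10: "q1 \<noteq> 0" using q0 q1 by auto
  have "degree ([:-a, 1:] * q1) = degree [:-a, 1::real:] + degree q1"
    by (rule degree_mult_eq) (use q10 in auto)
  then have dq: "degree q = Suc (degree q1)" using q1 by simp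
  have "proots q = proots [:-a, 1:] + proots q1" unfolding q1 by (rule proots_mult) (use q10 in auto)
  also have "proots [:-a, 1:] = {#a#}" using proots_linear_factor[of "-a"] by simp
  finally have "size (proots q1) = degree q1" using sz dq by simp
  then have rr1: "rr q1" using q10 by (simp add: rr_def)
  have roots1: "\<forall>x. poly q1 x = 0 \<longrightarrow> x < 0" using Suc.prems(2) q1 by auto
  have "lead_coeff q = lead_coeff [:-a, 1:] * lead_coeff q1" unfolding q1 by (rule lead_coeff_mult)
  then have lc1: "lead_coeff q1 > 0" using Suc.prems(3) by simp
  have d1: "d = degree q1" using Suc.hyps(2) dq by simp
  have IH: "coeff q1 j > 0" if "j \<le> degree q1" for j
    using Suc.hyps(1)[OF d1 rr1 roots1 lc1 that] .
  have cq: "coeff q i = (-a) * coeff q1 i + (case i of 0 \<Rightarrow> 0 | Suc j \<Rightarrow> coeff q1 j)"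
    using q1 by (simp add: coeff_pCons split: nat.split)
  have nn: "coeff q1 j \<ge> 0" for j
    using IH[of j] coeff_eq_0[of q1 j] by (cases "j \<le> degree q1") auto
  show ?case
  proof (cases i)
    case 0
    then show ?thesis using cq IH[of 0] a0 by (simp add: mult_neg_pos)
  next
    case (Suc j)
    then have "j \<le> degree q1" using Suc.prems(4) dq by simp
    then have "coeff q1 j > 0" by (rule IH)
    moreover have "(-a) * coeff q1 i \<ge> 0" using a0 nn[of i] by (simp add: mult_nonpos_nonneg)
    ultimately show ?thesis using cq Suc by simp
  qed
qed

lemma esym0: "esym n 0 f = 1"
proof -
  have "Ssets n 0 = {{}}" by (auto dest: finite_subset)
  then show ?thesis unfolding esym_def by simp
qed

lemma rr_prod_linear:
  "rr (\<Prod>i<n. [:lam i, 1:]) \<and> degree (\<Prod>i<n. [:lam i, 1::real:]) = n"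
proof (induction n)
  case 0
  then show ?case by (simp add: rr_def)
next
  case (Suc n)
  define P where "P = (\<Prod>i<n. [:lam i, 1::real:])"
  have P0: "P \<noteq> 0" using Suc by (simp add: rr_def P_def)
  have e: "(\<Prod>i<Suc n. [:lam i, 1:]) = P * [:lam n, 1:]" by (simp add: P_def)
  have "degree (P * [:lam n, 1:]) = degree P + degree [:lam n, 1:]"
    by (rule degree_mult_eq) (use P0 in auto)
  then have "degree (P * [:lam n, 1:]) = Suc n" using Suc by (simp add: P_def)
  moreover have "proots (P * [:lam n, 1:]) = proots P + proots [:lam n, 1:]"
    by (rule proots_mult) (use P0 in auto)
  then have "size (proots (P * [:lam n, 1:])) = Suc n"
    using Suc by (simp add: rr_def P_def)
  moreover have "P * [:lam n, 1:] \<noteq> 0" using P0 by (simp del: mult_pCons_right mult_pCons_left)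
  ultimately show ?case unfolding e by (simp add: rr_def)
qed

lemma garding_L:
  fixes lam :: "nat \<Rightarrow> real"
  assumes mn: "m \<le> n" and nn: "\<forall>j\<le>m. esym n j lam \<ge> 0" and pm: "esym n m lam > 0" and j: "j \<le> m"
  shows "esym n j lam > 0"
proof -
  define p where "p = (\<Prod>i<n. [:lam i, 1::real:])"
  define q where "q = (pderiv ^^ (n - m)) p"
  have rrp: "rr p" "degree p = n" using rr_prod_linear[of lam n] by (auto simp: p_def)
  have rrq: "rr q" and dq: "degree q = m"
    using rr_pderiv_iter[OF rrp(1), of "n - m"] rrp(2) mn by (auto simp: q_def)
  have cq: "coeff q i = (fact (i + (n - m)) / fact i) * esym n (m - i) lam" if "i \<le> m" for i
  proof -
    have "coeff q i = (fact (i + (n - m)) / fact i) * coeff p (i + (n - m))"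
      by (simp add: q_def coeff_pderiv_iter)
    also have "coeff p (i + (n - m)) = esym n (n - (i + (n - m))) lam"
      unfolding p_def using that mn by (intro vieta) simp
    also have "n - (i + (n - m)) = m - i" using that mn by simp
    finally show ?thesis .
  qed
  have cpos: "(fact (i + (n - m)) / fact i :: real) > 0" for i by simp
  have cnn: "coeff q i \<ge> 0" for i
  proof (cases "i \<le> m")
    case True
    then show ?thesis using cq[OF True] nn cpos[of i] by simp
  next
    case False
    then show ?thesis using coeff_eq_0[of q i] dq by simp
  qed
  have c0: "coeff q 0 > 0" using cq[of 0] pm by simp
  have roots: "\<forall>x. poly q x = 0 \<longrightarrow> x < 0"
  proof (intro allI impI)
    fix x assume px: "poly q x = 0"
    show "x < 0"
    proof (rule ccontr)
      assume "\<not> x < 0"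
      then have x0: "x \<ge> 0" by simp
      have "coeff q 0 * x ^ 0 \<le> (\<Sum>i\<le>degree q. coeff q i * x ^ i)"
        by (rule member_le_sum) (use cnn x0 in auto)
      then have "poly q x > 0" using c0 by (simp add: poly_altdef)
      then show False using px by simp
    qed
  qed
  have lc: "lead_coeff q > 0" using cq[of m] dq esym0[of n lam] by simp
  have "coeff q (m - j) > 0" using rr_neg_pos_coeffs[OF rrq roots lc] dq by simp
  then show ?thesis using cq[of "m - j"] j by (simp add: zero_less_mult_iff zero_less_divide_iff)
qed

lemma esym_cong: "(\<And>i. i < n \<Longrightarrow> f i = g i) \<Longrightarrow> esym n j f = esym n j g"
  unfolding esym_def by (intro sum.cong refl prod.cong) auto

lemma esym_nonneg_pos:
  assumes "\<And>i. i < n \<Longrightarrow> x i > 0" "j \<le> n"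
  shows "esym n j x > 0"
  unfolding esym_def
proof (rule sum_pos)
  show "finite (Ssets n j)" by (rule finite_Ssets)
  have "{..<j} \<in> Ssets n j" using assms(2) by auto
  then show "Ssets n j \<noteq> {}" by blast
  fix I assume "I \<in> Ssets n j"
  then show "0 < prod x I" using assms(1) by (intro prod_pos) auto
qed

lemma esym_continuous: "continuous_on UNIV (esym n j)"
proof -
  have e: "esym n j = (\<lambda>x. \<Sum>I\<in>Ssets n j. \<Prod>i\<in>I. x i)" by (simp add: esym_def fun_eq_iff)
  show ?thesis unfolding e by (intro continuous_intros) simp
qed

lemma Hm_pos_iff: "m \<le> n \<Longrightarrow> Hm n m x > 0 \<longleftrightarrow> esym n m x > 0"
  by (simp add: Hm_def zero_less_divide_iff)

lemma gamma_pos: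
  assumes lam: "lam \<in> Gamma n m" and mn: "m \<le> n" and j: "j \<le> m"
  shows "esym n j lam > 0"
proof -
  define U where "U = {lam \<in> Rn n. Hm n m lam > 0}"
  from lam obtain p where p: "p \<in> pos_cone n" and lC: "lam \<in> connected_component_set U p"
    unfolding Gamma_def U_def by blast
  define C where "C = connected_component_set U p"
  define A where "A = (\<Inter>j\<in>{..m}. {x. 0 < esym n j x})"
  define B where "B = (\<Union>j\<in>{..m}. {x. esym n j x < 0})"
  have oA: "open A" unfolding A_def
    by (intro open_INT ballI open_Collect_less continuous_on_const esym_continuous) auto
  have oB: "open B" unfolding B_def
    by (intro open_UN ballI open_Collect_less continuous_on_const esym_continuous)
  have cC: "connected C" unfolding C_def by (rule connected_connected_component)
  have CU: "C \<subseteq> U" unfolding C_def by (rule connected_component_subset)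
  have "C \<subseteq> A \<union> B"
  proof
    fix x assume "x \<in> C"
    then have "x \<in> U" using CU by auto
    then have xm: "esym n m x > 0" using Hm_pos_iff[OF mn] by (auto simp: U_def)
    show "x \<in> A \<union> B"
    proof (cases "\<exists>j\<le>m. esym n j x < 0")
      case True
      then show ?thesis by (auto simp: B_def)
    next
      case False
      then have "\<forall>j\<le>m. esym n j x \<ge> 0" by (auto simp: not_less)
      then have "\<forall>j\<le>m. esym n j x > 0" using garding_L[OF mn _ xm] by blast
      then show ?thesis by (auto simp: A_def)
    qed
  qed
  moreover have "A \<inter> B \<inter> C = {}"
  proof (rule ccontr)
    assume "A \<inter> B \<inter> C \<noteq> {}"
    then obtain x where "x \<in> A" "x \<in> B" by blast
    from \<open>x \<in> B\<close> obtain k where k: "k \<le> m" "esym n k x < 0" by (auto simp: B_def)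
    from \<open>x \<in> A\<close> k(1) have "esym n k x > 0" by (auto simp: A_def)
    with k(2) show False by simp
  qed
  ultimately have "A \<inter> C = {} \<or> B \<inter> C = {}" using connectedD[OF cC oA oB] by blast
  moreover have "p \<in> A \<inter> C"
  proof -
    have pos: "\<And>i. i < n \<Longrightarrow> p i > 0" using p by (auto simp: pos_cone_def)
    have "p \<in> U" using p esym_nonneg_pos[OF pos mn] Hm_pos_iff[OF mn]
      by (auto simp: U_def pos_cone_def)
    then have "p \<in> C" unfolding C_def by simp
    moreover have "p \<in> A" using esym_nonneg_pos[OF pos] mn by (auto simp: A_def)
    ultimately show ?thesis by blast
  qed
  ultimately have "B \<inter> C = {}" by blast
  moreover have "lam \<in> C" using lC by (simp add: C_def)
  ultimately have "lam \<in> A" using \<open>C \<subseteq> A \<union> B\<close> by blast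
  then show ?thesis using j by (auto simp: A_def)
qed

lemma gamma_shift:
  assumes lam: "lam \<in> Gamma n m" and mn: "m \<le> n" and a: "a > 0" and b: "b \<ge> 0"
  shows "(\<lambda>i. if i < n then a * lam i + b else 0) \<in> Gamma n m"
proof -
  define U where "U = {lam \<in> Rn n. Hm n m lam > 0}"
  from lam obtain p where p: "p \<in> pos_cone n" and lC: "lam \<in> connected_component_set U p"
    unfolding Gamma_def U_def by blast
  have lamU: "lam \<in> U" using lC connected_component_subset by blast
  then have lamR: "\<And>i. i \<ge> n \<Longrightarrow> lam i = 0" by (auto simp: U_def Rn_def)
  define x where "x t = (\<lambda>i. if i < n then (1 - t + t * a) * lam i + t * b else 0)" for t :: real
  define T where "T = x ` {0..1}"
  have cT: "connected T" unfolding T_def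
  proof (rule connected_continuous_image)
    show "continuous_on {0..1} x" unfolding x_def
    proof (rule continuous_on_coordinatewise_then_product)
      fix i show "continuous_on {0..1} (\<lambda>t. if i < n then (1 - t + t * a) * lam i + t * b else 0)"
        by (cases "i < n") (auto intro!: continuous_intros)
    qed
  qed simp
  have TU: "T \<subseteq> U"
  proof
    fix y assume "y \<in> T"
    then obtain t where t: "0 \<le> t" "t \<le> 1" and y: "y = x t" by (auto simp: T_def)
    define c where "c = 1 - t + t * a"
    have c: "c > 0"
    proof (cases "t = 0")
      case True
      then show ?thesis by (simp add: c_def)
    next
      case False
      then have "t * a > 0" using t a by simp
      then show ?thesis using t unfolding c_def by linarith
    qed
    have "esym n m y = esym n m (\<lambda>i. c * lam i + t * b)"
      by (rule esym_cong) (simp add: y x_def c_def)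
    also have "\<dots> = (\<Sum>j\<le>m. real ((n - j) choose (m - j)) * c ^ j * (t * b) ^ (m - j) * esym n j lam)"
      by (rule esym_shift)
    also have "\<dots> \<ge> real ((n - m) choose (m - m)) * c ^ m * (t * b) ^ (m - m) * esym n m lam"
    proof (rule member_le_sum)
      fix k assume "k \<in> {..m} - {m}"
      then have "esym n k lam > 0" using gamma_pos[OF lam mn] by auto
      moreover have "c ^ k > 0" using c by simp
      moreover have "(t * b) ^ (m - k) \<ge> 0" using t b by simp
      ultimately show "0 \<le> real ((n - k) choose (m - k)) * c ^ k * (t * b) ^ (m - k) * esym n k lam"
        by simp
    qed simp_all
    also have "real ((n - m) choose (m - m)) * c ^ m * (t * b) ^ (m - m) * esym n m lam = c ^ m * esym n m lam"
      by simp
    finally have ge: "c ^ m * esym n m lam \<le> esym n m y" .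
    have "c ^ m * esym n m lam > 0" using c gamma_pos[OF lam mn, of m] by simp
    then have "esym n m y > 0" using ge by linarith
    moreover have "y \<in> Rn n" by (simp add: y x_def Rn_def)
    ultimately show "y \<in> U" using Hm_pos_iff[OF mn] by (simp add: U_def)
  qed
  have "lam = x 0" using lamR by (auto simp: x_def fun_eq_iff)
  then have "lam \<in> T" by (auto simp: T_def)
  then have "T \<subseteq> connected_component_set U lam"
    by (rule connected_component_maximal[OF _ cT TU])
  also have "\<dots> = connected_component_set U p" by (rule connected_component_eq[OF lC])
  finally have sub: "T \<subseteq> connected_component_set U p" .
  have "x 1 \<in> T" by (auto simp: T_def)
  then have "x 1 \<in> connected_component_set U p" using sub by blast
  moreover have "x 1 = (\<lambda>i. if i < n then a * lam i + b else 0)" by (simp add: x_def fun_eq_iff)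
  ultimately show ?thesis using p unfolding Gamma_def U_def by auto
qed

lemma mv_sum: "(A::real^'n^'m) *v (\<Sum>i\<in>I. f i) = (\<Sum>i\<in>I. A *v f i)"
  by (induct I rule: infinite_finite_induct) (auto simp: matrix_vector_right_distrib)

lemma eig_dim:
  fixes u :: "real^'n" and S M :: "real^'n^'n" and b :: "nat \<Rightarrow> real^'n"
  assumes dim: "CARD('n) = Suc n" and u0: "u \<noteq> 0"
    and inj: "\<And>y. y \<bullet> u = 0 \<Longrightarrow> M *v y = 0 \<Longrightarrow> y = 0"
    and binj: "inj_on b {..<n}" and bind: "independent (b ` {..<n})"
    and beig: "\<forall>i<n. b i \<bullet> u = 0 \<and> S *v b i = lam i *\<^sub>R (M *v b i)"
  shows "dim {x. x \<bullet> u = 0 \<and> S *v x = c *\<^sub>R (M *v x)} = card {i. i < n \<and> lam i = c}"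
proof -
  define T where "T = {x::real^'n. u \<bullet> x = 0}"
  define E where "E = {x. x \<bullet> u = 0 \<and> S *v x = c *\<^sub>R (M *v x)}"
  define J where "J = {i. i < n \<and> lam i = c}"
  define B where "B = b ` {..<n}"
  have dT: "dim T = n" unfolding T_def using dim_hyperplane[OF u0] dim by simp
  have BT: "B \<subseteq> T" using beig by (auto simp: B_def T_def inner_commute)
  have cB: "card B = n" using binj by (simp add: B_def card_image)
  have TB: "T \<subseteq> span B" by (rule card_ge_dim_independent[OF BT]) (use bind dT cB B_def in auto)
  have fB: "finite B" by (simp add: B_def)
  have sT: "subspace T" unfolding T_def by (rule subspace_hyperplane)
  have sE: "subspace E"
    unfolding subspace_def E_def
    by (auto simp: inner_add_left matrix_vector_right_distrib matrix_vector_mult_scaleR scaleR_add_right)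
  have "E = span (b ` J)"
  proof
    show "span (b ` J) \<subseteq> E"
      by (rule span_minimal[OF _ sE]) (use beig in \<open>auto simp: E_def J_def\<close>)
  next
    show "E \<subseteq> span (b ` J)"
    proof
      fix x assume xE: "x \<in> E"
      then have "x \<in> T" by (auto simp: E_def T_def inner_commute)
      then have "x \<in> span B" using TB by auto
      then obtain a where xa: "x = (\<Sum>v\<in>B. a v *\<^sub>R v)" using span_finite[OF fB] by auto
      define al where "al i = a (b i)" for i
      have xs: "x = (\<Sum>i<n. al i *\<^sub>R b i)"
        unfolding xa B_def al_def by (subst sum.reindex[OF binj]) simp
      define y where "y = (\<Sum>i<n. (al i * (lam i - c)) *\<^sub>R b i)"
      have My: "M *v y = S *v x - c *\<^sub>R (M *v x)"
      proof -
        have "M *v y = (\<Sum>i<n. (al i * (lam i - c)) *\<^sub>R (M *v b i))"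
          unfolding y_def by (simp add: mv_sum matrix_vector_mult_scaleR)
        also have "\<dots> = (\<Sum>i<n. al i *\<^sub>R (S *v b i)) - c *\<^sub>R (\<Sum>i<n. al i *\<^sub>R (M *v b i))"
          using beig by (simp add: scaleR_sum_right sum_subtractf[symmetric] algebra_simps)
        also have "\<dots> = S *v x - c *\<^sub>R (M *v x)"
          unfolding xs by (simp add: mv_sum matrix_vector_mult_scaleR)
        finally show ?thesis .
      qed
      then have "M *v y = 0" using xE by (simp add: E_def)
      moreover have "y \<bullet> u = 0" using beig by (simp add: y_def inner_sum_left)
      ultimately have y0: "y = 0" using inj by blast
      have ind: "\<forall>v\<in>B. g v = 0" if "(\<Sum>v\<in>B. g v *\<^sub>R v) = 0" for g
        using bind fB that unfolding independent_explicit_finite_subsets B_def by blast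
      have "\<forall>v\<in>B. al (inv_into {..<n} b v) * (lam (inv_into {..<n} b v) - c) = 0"
      proof (rule ind)
        have "(\<Sum>v\<in>B. (al (inv_into {..<n} b v) * (lam (inv_into {..<n} b v) - c)) *\<^sub>R v) = y"
          unfolding y_def B_def by (subst sum.reindex[OF binj]) (simp add: binj)
        then show "(\<Sum>v\<in>B. (al (inv_into {..<n} b v) * (lam (inv_into {..<n} b v) - c)) *\<^sub>R v) = 0"
          using y0 by simp
      qed
      then have coef: "al i * (lam i - c) = 0" if "i < n" for i
        using that binj by (auto simp: B_def)
      have "x = (\<Sum>i\<in>J. al i *\<^sub>R b i)"
        unfolding xs J_def
        by (rule sum.mono_neutral_right) (use coef in auto)
      also have "\<dots> \<in> span (b ` J)"
        by (intro span_sum span_scale span_base) auto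
      finally show "x \<in> span (b ` J)" .
    qed
  qed
  moreover have "independent (b ` J)"
    by (rule independent_mono[OF bind]) (auto simp: J_def)
  moreover have "card (b ` J) = card J"
    by (rule card_image) (rule inj_on_subset[OF binj], auto simp: J_def)
  ultimately show ?thesis by (simp add: E_def J_def dim_eq_card_independent)
qed

lemma esym_eig_unique:
  fixes u :: "real^'n" and S M :: "real^'n^'n" and b b' :: "nat \<Rightarrow> real^'n"
  assumes dim: "CARD('n) = Suc n" and u0: "u \<noteq> 0"
    and inj: "\<And>y. y \<bullet> u = 0 \<Longrightarrow> M *v y = 0 \<Longrightarrow> y = 0"
    and "inj_on b {..<n}" "independent (b ` {..<n})"
    and "\<forall>i<n. b i \<bullet> u = 0 \<and> S *v b i = lam i *\<^sub>R (M *v b i)"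
    and "inj_on b' {..<n}" "independent (b' ` {..<n})"
    and "\<forall>i<n. b' i \<bullet> u = 0 \<and> S *v b' i = lam' i *\<^sub>R (M *v b' i)"
  shows "esym n j lam = esym n j lam'"
proof (rule esym_count_eq)
  fix c
  show "card {i. i < n \<and> lam i = c} = card {i. i < n \<and> lam' i = c}"
    using eig_dim[OF dim u0 inj assms(4-6), of c] eig_dim[OF dim u0 inj assms(7-9), of c] by simp
qed

lemma hext_comp: "hext (\<lambda>y. G (z y)) = (\<lambda>y. G (hext z y))"
  by (simp add: hext_def fun_eq_iff)

lemma egrad_chain:
  fixes z :: "real^'n \<Rightarrow> real"
  assumes dz: "hext z differentiable (at x)"
    and dG: "(G has_real_derivative Gp (hext z x)) (at (hext z x))"
  shows "egrad (hext (\<lambda>y. G (z y))) x = Gp (hext z x) *\<^sub>R egrad (hext z) x"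
proof -
  define D where "D = frechet_derivative (hext z) (at x)"
  have hD: "(hext z has_derivative D) (at x)" using dz by (simp add: D_def frechet_derivative_works)
  have "((\<lambda>y. G (hext z y)) has_derivative (\<lambda>v. D v * Gp (hext z x))) (at x)"
    by (rule DERIV_compose_FDERIV[OF dG hD])
  then have "frechet_derivative (hext (\<lambda>y. G (z y))) (at x) = (\<lambda>v. D v * Gp (hext z x))"
    unfolding hext_comp by (rule frechet_derivative_at[symmetric])
  then show ?thesis by (simp add: egrad_def D_def vec_eq_iff)
qed

lemma ehess_chain:
  fixes z :: "real^'n \<Rightarrow> real"
  assumes x0: "x \<noteq> 0"
    and dz: "\<And>y. y \<noteq> 0 \<Longrightarrow> hext z differentiable (at y)"
    and dg: "\<And>i. (\<lambda>y. egrad (hext z) y $ i) differentiable (at x)"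
    and dG: "\<And>y. y \<noteq> 0 \<Longrightarrow> (G has_real_derivative Ga (hext z y)) (at (hext z y))"
    and dGa: "(Ga has_real_derivative Gb (hext z x)) (at (hext z x))"
  shows "ehess (hext (\<lambda>y. G (z y))) x =
     Ga (hext z x) *\<^sub>R ehess (hext z) x + Gb (hext z x) *\<^sub>R outer (egrad (hext z) x) (egrad (hext z) x)"
proof -
  define D where "D = frechet_derivative (hext z) (at x)"
  have hD: "(hext z has_derivative D) (at x)" using dz[OF x0] by (simp add: D_def frechet_derivative_works)
  have egD: "egrad (hext z) x $ j = D (axis j 1)" for j by (simp add: egrad_def D_def)
  have row: "frechet_derivative (\<lambda>y. egrad (hext (\<lambda>y. G (z y))) y $ i) (at x) =
      (\<lambda>v. Ga (hext z x) * frechet_derivative (\<lambda>y. egrad (hext z) y $ i) (at x) v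
          + D v * Gb (hext z x) * egrad (hext z) x $ i)" for i
  proof -
    define Di where "Di = frechet_derivative (\<lambda>y. egrad (hext z) y $ i) (at x)"
    have hDi: "((\<lambda>y. egrad (hext z) y $ i) has_derivative Di) (at x)"
      using dg by (simp add: Di_def frechet_derivative_works)
    have hf: "((\<lambda>y. Ga (hext z y)) has_derivative (\<lambda>v. D v * Gb (hext z x))) (at x)"
      by (rule DERIV_compose_FDERIV[OF dGa hD])
    have "((\<lambda>y. Ga (hext z y) * egrad (hext z) y $ i) has_derivative
        (\<lambda>v. Ga (hext z x) * Di v + D v * Gb (hext z x) * egrad (hext z) x $ i)) (at x)"
      using has_derivative_mult[OF hf hDi] by (simp add: algebra_simps)
    then have "((\<lambda>y. egrad (hext (\<lambda>y. G (z y))) y $ i) has_derivative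
        (\<lambda>v. Ga (hext z x) * Di v + D v * Gb (hext z x) * egrad (hext z) x $ i)) (at x)"
    proof (rule has_derivative_transform_within_open)
      show "open (- {0::real^'n})" by (simp add: open_Compl)
      show "x \<in> - {0}" using x0 by simp
      fix y :: "real^'n" assume "y \<in> - {0}"
      then have y0: "y \<noteq> 0" by simp
      show "Ga (hext z y) * egrad (hext z) y $ i = egrad (hext (\<lambda>y. G (z y))) y $ i"
        using egrad_chain[where z=z and G=G and Gp=Ga and x=y, OF dz[OF y0] dG[OF y0]] by simp
    qed
    then show ?thesis unfolding Di_def by (rule frechet_derivative_at[symmetric])
  qed
  show ?thesis
    by (simp add: ehess_def row vec_eq_iff outer_def egD algebra_simps)
qed

lemma egrad_orth:
  fixes z :: "real^'n \<Rightarrow> real"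
  assumes x0: "x \<noteq> 0" and dz: "hext z differentiable (at x)"
  shows "egrad (hext z) x \<bullet> x = 0"
proof -
  define D where "D = frechet_derivative (hext z) (at x)"
  have hD: "(hext z has_derivative D) (at x)" using dz by (simp add: D_def frechet_derivative_works)
  have lin: "linear D" using hD by (rule has_derivative_linear)
  have hc: "((\<lambda>t::real. (1 + t) *\<^sub>R x) has_derivative (\<lambda>t. t *\<^sub>R x)) (at 0)"
    by (auto intro!: derivative_eq_intros simp: algebra_simps)
  have "((\<lambda>t::real. hext z ((1 + t) *\<^sub>R x)) has_derivative (\<lambda>t. D (t *\<^sub>R x))) (at 0)"
    using has_derivative_compose[OF hc] hD by simp
  moreover have "((\<lambda>t::real. hext z ((1 + t) *\<^sub>R x)) has_derivative (\<lambda>t. 0)) (at 0)"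
  proof (rule has_derivative_transform_within_open[where f="\<lambda>t. hext z x" and s="ball 0 1"])
    show "((\<lambda>t. hext z x) has_derivative (\<lambda>t. 0)) (at (0::real))" by simp
    show "open (ball (0::real) 1)" by simp
    show "(0::real) \<in> ball 0 1" by simp
    fix t :: real assume "t \<in> ball 0 1"
    then have t: "1 + t > 0" by (simp add: dist_real_def)
    then have "norm ((1 + t) *\<^sub>R x) = (1 + t) * norm x" by simp
    then have eq: "((1 + t) *\<^sub>R x) /\<^sub>R norm ((1 + t) *\<^sub>R x) = x /\<^sub>R norm x" using t by simp
    show "hext z x = hext z ((1 + t) *\<^sub>R x)" by (simp only: hext_def eq)
  qed
  ultimately have "(\<lambda>t. D (t *\<^sub>R x)) = (\<lambda>t. 0)" by (rule has_derivative_unique)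
  then have Dx: "D x = 0" by (metis scaleR_one)
  have "egrad (hext z) x \<bullet> x = (\<Sum>i\<in>UNIV. D (axis i 1) * x $ i)"
    by (simp add: inner_vec_def egrad_def D_def)
  also have "\<dots> = D (\<Sum>i\<in>UNIV. x $ i *\<^sub>R axis i 1)"
    by (simp add: linear_sum[OF lin] linear_scale[OF lin] mult.commute)
  also have "(\<Sum>i\<in>UNIV. x $ i *\<^sub>R axis i 1) = x"
    using basis_expansion[of x] by (simp add: scalar_mult_eq_scaleR)
  finally show ?thesis using Dx by simp
qed

lemma outer_mv: "outer a c *v y = (c \<bullet> y) *\<^sub>R (a::real^'n)"
  by (simp add: outer_def matrix_vector_mult_def inner_vec_def vec_eq_iff sum_distrib_left mult_ac)

lemma tproj_mv: "tproj u *v y = y - (u \<bullet> y) *\<^sub>R (u::real^'n)"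
  by (simp add: tproj_def matrix_vector_mult_diff_rdistrib outer_mv)

lemma tanh_artanh: "\<bar>w\<bar> < 1 \<Longrightarrow> tanh (artanh w) = (w::real)"
proof -
  assume w: "\<bar>w\<bar> < 1"
  have w1: "1 + w > 0" "1 - w > 0" using w by (auto simp: abs_less_iff)
  have pos: "(1 + w) / (1 - w) > 0" using w1 by simp
  define E where "E = exp (- 2 * artanh w)"
  have E: "E = (1 - w) / (1 + w)"
  proof -
    have "- 2 * artanh w = - ln ((1 + w) / (1 - w))" by (simp add: artanh_def)
    then have "E = inverse ((1 + w) / (1 - w))"
      using pos by (simp add: E_def exp_minus)
    then show ?thesis by simp
  qed
  have "tanh (artanh w) = (1 - E) / (1 + E)" by (simp add: tanh_real_altdef E_def)
  also have "\<dots> = w" using w1 by (simp add: E field_simps)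
  finally show ?thesis .
qed

lemma tK_m1: "tK (-1) = tanh" and tK_1: "tK 1 = tan"
  and tKi_m1: "tK_inv (-1) = artanh" and tKi_1: "tK_inv 1 = arctan"
  and phi_m1: "phi (-1) = sinh" and phi_1: "phi 1 = sin"
  and dphi_m1: "dphi (-1) = cosh" and dphi_1: "dphi 1 = cos"
  by (auto simp: fun_eq_iff tK_def tK_inv_def phi_def dphi_def)

lemma tK_half:
  assumes K: "K = -1 \<or> K = 1" and a: "K = 1 \<longrightarrow> \<bar>a\<bar> < pi/2"
  shows "1 + K * (tK K a)\<^sup>2 > 0"
    and "phi K (2 * a) = 2 * tK K a / (1 + K * (tK K a)\<^sup>2)"
    and "dphi K (2 * a) = (1 - K * (tK K a)\<^sup>2) / (1 + K * (tK K a)\<^sup>2)"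
proof -
  have "1 + K * (tK K a)\<^sup>2 > 0 \<and> phi K (2 * a) = 2 * tK K a / (1 + K * (tK K a)\<^sup>2) \<and>
        dphi K (2 * a) = (1 - K * (tK K a)\<^sup>2) / (1 + K * (tK K a)\<^sup>2)"
  using K
  proof
    assume K1: "K = -1"
    have c0: "cosh a \<noteq> 0" by simp
    have s2: "(sinh a)\<^sup>2 = (cosh a)\<^sup>2 - 1" using cosh_square_eq[of a] by simp
    have e1: "1 - (tanh a)\<^sup>2 = 1 / (cosh a)\<^sup>2"
      using c0 by (simp add: tanh_def power_divide s2 field_simps)
    have h1: "1 + K * (tK K a)\<^sup>2 = 1 / (cosh a)\<^sup>2" using K1 e1 by (simp add: tK_m1)
    have h2: "1 - K * (tK K a)\<^sup>2 = 1 + (tanh a)\<^sup>2" using K1 by (simp add: tK_m1)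
    have "phi K (2 * a) = 2 * tK K a / (1 + K * (tK K a)\<^sup>2)"
      unfolding h1 using K1 c0 by (simp add: tK_m1 phi_m1 sinh_double tanh_def power2_eq_square)
    moreover have "dphi K (2 * a) = (1 - K * (tK K a)\<^sup>2) / (1 + K * (tK K a)\<^sup>2)"
      unfolding h1 h2 using K1 c0 cosh_double[of a] by (simp add: dphi_m1 tanh_def power_divide field_simps)
    moreover have "1 + K * (tK K a)\<^sup>2 > 0" unfolding h1 using c0 by simp
    ultimately show ?thesis by simp
  next
    assume K1: "K = 1"
    have "\<bar>a\<bar> < pi/2" using a K1 by simp
    then have "-(pi/2) < a" "a < pi/2" by (simp_all add: abs_less_iff)
    then have c0: "cos a \<noteq> 0" using cos_gt_zero_pi[of a] by simp
    have pos: "1 + (tan a)\<^sup>2 > 0" by (simp add: add_pos_nonneg)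
    show ?thesis using K1 pos c0
      by (simp add: tK_1 phi_1 dphi_1 sin_tan_half cos_tan_half)
  qed
  then show "1 + K * (tK K a)\<^sup>2 > 0"
    and "phi K (2 * a) = 2 * tK K a / (1 + K * (tK K a)\<^sup>2)"
    and "dphi K (2 * a) = (1 - K * (tK K a)\<^sup>2) / (1 + K * (tK K a)\<^sup>2)" by auto
qed

lemma tK_inv_tK:
  assumes K: "K = -1 \<or> K = 1" and a: "K = 1 \<longrightarrow> \<bar>a\<bar> < pi/2"
  shows "tK_inv K (tK K a) = a"
  using K a by (auto simp: tK_m1 tKi_m1 tK_1 tKi_1 artanh_tanh_real abs_less_iff arctan_tan)

lemma tK_tK_inv:
  assumes K: "K = -1 \<or> K = 1" and w: "K = -1 \<longrightarrow> \<bar>w\<bar> < 1"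
  shows "tK K (tK_inv K w) = w"
  using K w by (auto simp: tK_m1 tKi_m1 tK_1 tKi_1 tanh_artanh tan_arctan)

lemma tK_inv_range:
  assumes K: "K = -1 \<or> K = 1"
  shows "K = 1 \<longrightarrow> \<bar>tK_inv K w\<bar> < pi/2"
  using arctan_bounded[of w] by (auto simp: tKi_1 abs_less_iff)

lemma tK_deriv:
  assumes K: "K = -1 \<or> K = 1" and a: "K = 1 \<longrightarrow> \<bar>a\<bar> < pi/2"
  shows "(tK K has_real_derivative (1 + K * (tK K a)\<^sup>2)) (at a)"
  using K
proof
  assume K1: "K = -1"
  have "(tanh has_real_derivative (1 - (tanh a)\<^sup>2)) (at a)"
    by (auto intro!: derivative_eq_intros)
  then show ?thesis using K1 by (simp add: tK_m1)
next
  assume K1: "K = 1"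
  have "\<bar>a\<bar> < pi/2" using a K1 by simp
  then have "-(pi/2) < a" "a < pi/2" by (simp_all add: abs_less_iff)
  then have c0: "cos a \<noteq> 0" using cos_gt_zero_pi[of a] by simp
  have "inverse ((cos a)\<^sup>2) = 1 + (tan a)\<^sup>2"
    using c0 by (simp add: tan_def field_simps sin_cos_squared_add3 power2_eq_square)
  then show ?thesis using K1 DERIV_tan[OF c0] by (simp add: tK_1)
qed

lemma tK_inv_deriv:
  assumes K: "K = -1 \<or> K = 1" and w: "K = -1 \<longrightarrow> \<bar>w\<bar> < 1"
  shows "(tK_inv K has_real_derivative (1 / (1 + K * w\<^sup>2))) (at w)"
  using K
proof
  assume K1: "K = -1"
  then show ?thesis using artanh_real_has_field_derivative[of w UNIV] w by (simp add: tKi_m1)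
next
  assume K1: "K = 1"
  then show ?thesis using DERIV_arctan[of w] by (simp add: tKi_1 divide_inverse)
qed

lemma phi_deriv:
  assumes K: "K = -1 \<or> K = 1"
  shows "(phi K has_real_derivative dphi K r) (at r)"
  using K
proof
  assume "K = -1"
  then show ?thesis by (auto simp: phi_m1 dphi_m1 intro!: derivative_eq_intros)
next
  assume "K = 1"
  then show ?thesis by (simp add: phi_1 dphi_1)
qed

definition Fs :: "real \<Rightarrow> real \<Rightarrow> real \<Rightarrow> real" where
  "Fs K s r = 2 * tK_inv K (s * tK K (r / 2))"

lemma Fs_deriv:
  assumes K: "K = -1 \<or> K = 1" and r: "K = 1 \<longrightarrow> \<bar>r / 2\<bar> < pi/2"
    and w: "K = -1 \<longrightarrow> \<bar>s * tK K (r / 2)\<bar> < 1"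
  shows "(Fs K s has_real_derivative
      (s * (1 + K * (tK K (r/2))\<^sup>2) / (1 + K * (s * tK K (r/2))\<^sup>2))) (at r)"
proof -
  have den: "1 + K * (s * tK K (r/2))\<^sup>2 > 0"
    using tK_half(1)[OF K tK_inv_range[OF K], of "s * tK K (r/2)"] tK_tK_inv[OF K w] by simp
  have d1: "((\<lambda>r. r / 2) has_real_derivative 1 / 2) (at r)"
    by (auto intro!: derivative_eq_intros)
  have d2: "((\<lambda>r. tK K (r / 2)) has_real_derivative (1 + K * (tK K (r / 2))\<^sup>2) * (1 / 2)) (at r)"
    using DERIV_chain2[OF tK_deriv[OF K r] d1] by simp
  have d3: "((\<lambda>r. s * tK K (r / 2)) has_real_derivative s * ((1 + K * (tK K (r / 2))\<^sup>2) * (1 / 2))) (at r)"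
    by (rule DERIV_cmult[OF d2])
  have d4: "((\<lambda>r. tK_inv K (s * tK K (r / 2))) has_real_derivative
       (1 / (1 + K * (s * tK K (r / 2))\<^sup>2)) * (s * ((1 + K * (tK K (r / 2))\<^sup>2) * (1 / 2)))) (at r)"
    by (rule DERIV_chain2[OF tK_inv_deriv[OF K w] d3])
  have "((\<lambda>r. 2 * tK_inv K (s * tK K (r / 2))) has_real_derivative
       2 * ((1 / (1 + K * (s * tK K (r / 2))\<^sup>2)) * (s * ((1 + K * (tK K (r / 2))\<^sup>2) * (1 / 2))))) (at r)"
    by (rule DERIV_cmult[OF d4])
  then show ?thesis unfolding Fs_def[abs_def]
    by (rule DERIV_cong) (use den in \<open>simp add: field_simps\<close>)
qed

lemma mats_mv:
  fixes u y :: "real^'n"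
  assumes yu: "y \<bullet> u = 0"
  shows "metric_mat K w u *v y = (phi K (w u))\<^sup>2 *\<^sub>R y + (sgrad w u \<bullet> y) *\<^sub>R sgrad w u"
    and "sff_mat K w u *v y = (1 / sqrt (1 + (sgrad w u \<bullet> sgrad w u) / (phi K (w u))\<^sup>2)) *\<^sub>R
          ((phi K (w u) * dphi K (w u)) *\<^sub>R y - shess w u *v y
            + ((2 * dphi K (w u) / phi K (w u)) * (sgrad w u \<bullet> y)) *\<^sub>R sgrad w u)"
proof -
  have Ty: "tproj u *v y = y" using yu by (simp add: tproj_mv inner_commute)
  show "metric_mat K w u *v y = (phi K (w u))\<^sup>2 *\<^sub>R y + (sgrad w u \<bullet> y) *\<^sub>R sgrad w u"
    by (simp add: metric_mat_def matrix_vector_mult_add_rdistrib scaleR_matrix_vector_assoc[symmetric] Ty outer_mv)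
  show "sff_mat K w u *v y = (1 / sqrt (1 + (sgrad w u \<bullet> sgrad w u) / (phi K (w u))\<^sup>2)) *\<^sub>R
          ((phi K (w u) * dphi K (w u)) *\<^sub>R y - shess w u *v y
            + ((2 * dphi K (w u) / phi K (w u)) * (sgrad w u \<bullet> y)) *\<^sub>R sgrad w u)"
    by (simp add: sff_mat_def Let_def matrix_vector_mult_add_rdistrib matrix_vector_mult_diff_rdistrib
        scaleR_matrix_vector_assoc[symmetric] Ty outer_mv)
qed

lemma metric_inj:
  fixes u y :: "real^'n"
  assumes p: "phi K (w u) \<noteq> 0" and yu: "y \<bullet> u = 0" and My: "metric_mat K w u *v y = 0"
  shows "y = 0"
proof -
  have "0 = y \<bullet> (metric_mat K w u *v y)" using My by simp
  also have "\<dots> = (phi K (w u))\<^sup>2 * (y \<bullet> y) + (sgrad w u \<bullet> y)\<^sup>2"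
    using mats_mv(1)[OF yu, of K w] by (simp add: inner_add_right power2_eq_square inner_commute)
  finally have "(phi K (w u))\<^sup>2 * (y \<bullet> y) = 0"
    by (smt (verit) zero_le_power2 inner_ge_zero mult_nonneg_nonneg)
  then have "y \<bullet> y = 0" using p by simp
  then show ?thesis by simp
qed

lemma curvS_eq:
  fixes u :: "real^'n"
  assumes dim: "CARD('n) = Suc n" and u0: "u \<noteq> 0" and p: "phi K (w u) \<noteq> 0"
    and lam: "lam \<in> pcurv K n w u"
  shows "curvS K n j w u = esym n j lam"
proof -
  define lam' where "lam' = (SOME l. l \<in> pcurv K n w u)"
  have lam': "lam' \<in> pcurv K n w u" unfolding lam'_def using someI[of "\<lambda>l. l \<in> pcurv K n w u" lam] lam by simp
  from lam obtain b where b: "inj_on b {..<n}" "independent (b ` {..<n})"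
    "\<forall>i<n. b i \<bullet> u = 0 \<and> sff_mat K w u *v b i = lam i *\<^sub>R (metric_mat K w u *v b i)"
    unfolding pcurv_def by blast
  from lam' obtain b' where b': "inj_on b' {..<n}" "independent (b' ` {..<n})"
    "\<forall>i<n. b' i \<bullet> u = 0 \<and> sff_mat K w u *v b' i = lam' i *\<^sub>R (metric_mat K w u *v b' i)"
    unfolding pcurv_def by blast
  have "esym n j lam' = esym n j lam"
    by (rule esym_eig_unique[OF dim u0 _ b' b]) (use metric_inj[where K=K and w=w and u=u, OF p] in blast)
  then show ?thesis by (simp add: curvS_def lam'_def)
qed

lemma range_facts:
  assumes K: "K = -1 \<or> K = 1" and r0: "0 < r" and r1: "K = 1 \<longrightarrow> r < pi/2"
    and s0: "s > 0" and sv: "K = -1 \<longrightarrow> s * tK K (r/2) < 1"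
  shows "K = 1 \<longrightarrow> \<bar>r/2\<bar> < pi/2" and "tK K (r/2) > 0"
    and "K = -1 \<longrightarrow> \<bar>s * tK K (r/2)\<bar> < 1"
    and "1 + K * (tK K (r/2))\<^sup>2 > 0" and "1 + K * (s * tK K (r/2))\<^sup>2 > 0"
proof -
  show ra: "K = 1 \<longrightarrow> \<bar>r/2\<bar> < pi/2" using r0 r1 by auto
  show t0: "tK K (r/2) > 0"
    using K
  proof
    assume "K = -1" then show ?thesis using r0 by (simp add: tK_m1)
  next
    assume K1: "K = 1" then show ?thesis using r0 r1 by (simp add: tK_1 tan_gt_zero)
  qed
  show w: "K = -1 \<longrightarrow> \<bar>s * tK K (r/2)\<bar> < 1" using sv t0 s0 by auto
  show "1 + K * (tK K (r/2))\<^sup>2 > 0" by (rule tK_half(1)[OF K ra])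
  show "1 + K * (s * tK K (r/2))\<^sup>2 > 0"
    using tK_half(1)[OF K tK_inv_range[OF K], of "s * tK K (r/2)"] tK_tK_inv[OF K w] by simp
qed

lemma scal_vals:
  assumes K: "K = -1 \<or> K = 1" and r0: "0 < r" and r1: "K = 1 \<longrightarrow> r < pi/2"
    and s0: "s > 0" and sv: "K = -1 \<longrightarrow> s * tK K (r/2) < 1"
  shows "phi K r = 2 * tK K (r/2) / (1 + K * (tK K (r/2))\<^sup>2)"
    and "dphi K r = (1 - K * (tK K (r/2))\<^sup>2) / (1 + K * (tK K (r/2))\<^sup>2)"
    and "phi K (Fs K s r) = 2 * (s * tK K (r/2)) / (1 + K * (s * tK K (r/2))\<^sup>2)"
    and "dphi K (Fs K s r) = (1 - K * (s * tK K (r/2))\<^sup>2) / (1 + K * (s * tK K (r/2))\<^sup>2)"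
proof -
  note rf = range_facts[OF K r0 r1 s0 sv]
  have r2: "r = 2 * (r/2)" by simp
  show "phi K r = 2 * tK K (r/2) / (1 + K * (tK K (r/2))\<^sup>2)"
    using tK_half(2)[OF K rf(1)] by simp
  show "dphi K r = (1 - K * (tK K (r/2))\<^sup>2) / (1 + K * (tK K (r/2))\<^sup>2)"
    using tK_half(3)[OF K rf(1)] by simp
  have F: "Fs K s r = 2 * tK_inv K (s * tK K (r/2))" by (simp add: Fs_def)
  show "phi K (Fs K s r) = 2 * (s * tK K (r/2)) / (1 + K * (s * tK K (r/2))\<^sup>2)"
    unfolding F using tK_half(2)[OF K tK_inv_range[OF K], of "s * tK K (r/2)"] tK_tK_inv[OF K rf(3)] by simp
  show "dphi K (Fs K s r) = (1 - K * (s * tK K (r/2))\<^sup>2) / (1 + K * (s * tK K (r/2))\<^sup>2)"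
    unfolding F using tK_half(3)[OF K tK_inv_range[OF K], of "s * tK K (r/2)"] tK_tK_inv[OF K rf(3)] by simp
qed

definition G1 :: "real \<Rightarrow> real \<Rightarrow> real \<Rightarrow> real" where
  "G1 K s r = phi K (Fs K s r) / phi K r"

definition G2 :: "real \<Rightarrow> real \<Rightarrow> real \<Rightarrow> real" where
  "G2 K s r = (dphi K (Fs K s r) * G1 K s r * phi K r - phi K (Fs K s r) * dphi K r) / (phi K r * phi K r)"

lemma G_derivs:
  assumes K: "K = -1 \<or> K = 1" and r0: "0 < r" and r1: "K = 1 \<longrightarrow> r < pi/2"
    and s0: "s > 0" and sv: "K = -1 \<longrightarrow> s * tK K (r/2) < 1"
  shows "(Fs K s has_real_derivative G1 K s r) (at r)"
    and "(G1 K s has_real_derivative G2 K s r) (at r)"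
    and "phi K r > 0" and "phi K (Fs K s r) > 0"
proof -
  note rf = range_facts[OF K r0 r1 s0 sv]
  note sc = scal_vals[OF K r0 r1 s0 sv]
  define t where "t = tK K (r/2)"
  have t0: "t > 0" using rf(2) by (simp add: t_def)
  have d1: "1 + K * t\<^sup>2 > 0" "1 + K * (s * t)\<^sup>2 > 0" using rf(4,5) by (simp_all add: t_def)
  show pp: "phi K r > 0" using sc(1) t0 d1 by (simp add: t_def)
  show pP: "phi K (Fs K s r) > 0" using sc(3) t0 d1 s0 by (simp add: t_def)
  have "(Fs K s has_real_derivative (s * (1 + K * (tK K (r/2))\<^sup>2) / (1 + K * (s * tK K (r/2))\<^sup>2))) (at r)"
    by (rule Fs_deriv[OF K rf(1,3)])
  moreover have "s * (1 + K * (tK K (r/2))\<^sup>2) / (1 + K * (s * tK K (r/2))\<^sup>2) = G1 K s r"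
  proof -
    have n1: "1 + K * t\<^sup>2 \<noteq> 0" "1 + K * (s\<^sup>2 * t\<^sup>2) \<noteq> 0" "t \<noteq> 0"
      using d1 t0 by (simp_all add: power_mult_distrib)
    have aux: "\<And>D1 D2. D1 \<noteq> 0 \<Longrightarrow> D2 \<noteq> 0 \<Longrightarrow> t \<noteq> 0 \<Longrightarrow> s * D1 / D2 = (2*(s*t)/D2)/(2*t/D1)"
      by (simp add: field_simps)
    show ?thesis unfolding G1_def sc(1,3) t_def[symmetric]
      by (rule aux) (use d1 t0 in auto)
  qed
  ultimately show dF: "(Fs K s has_real_derivative G1 K s r) (at r)" by simp
  have "((\<lambda>r. phi K (Fs K s r) / phi K r) has_real_derivative G2 K s r) (at r)"
    unfolding G2_def
    by (rule DERIV_divide[OF DERIV_chain2[OF phi_deriv[OF K] dF] phi_deriv[OF K]])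
       (use pp in simp)
  then show "(G1 K s has_real_derivative G2 K s r) (at r)" by (simp add: G1_def[abs_def])
qed

lemma eig_transfer:
  fixes y g Hy :: "real^'n"
  assumes eq: "(1/W) *\<^sub>R ((p*dp) *\<^sub>R y - Hy + (2*dp/p*gy) *\<^sub>R g) = lam *\<^sub>R (p^2 *\<^sub>R y + gy *\<^sub>R g)"
   and W: "W > 0" and p: "p \<noteq> 0" and P: "P \<noteq> 0" and q: "q = P/p" and q2: "q2 = P*(dP - dp)/p^2"
  shows "(1/W) *\<^sub>R ((P*dP) *\<^sub>R y - (q *\<^sub>R Hy + (q2*gy) *\<^sub>R g) + (2*dP/P*(q*gy)) *\<^sub>R (q *\<^sub>R g)) =
     ((p/P)*lam + (dP-dp)/(P*W)) *\<^sub>R (P^2 *\<^sub>R y + (q*gy) *\<^sub>R (q *\<^sub>R g))"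
  unfolding vec_eq_iff
proof
  fix k
  have "((1/W) *\<^sub>R ((p*dp) *\<^sub>R y - Hy + (2*dp/p*gy) *\<^sub>R g)) $ k = (lam *\<^sub>R (p^2 *\<^sub>R y + gy *\<^sub>R g)) $ k"
    using eq by simp
  then have "(1/W) * ((p*dp) * y$k - Hy$k + (2*dp/p*gy) * g$k) = lam * (p^2 * y$k + gy * g$k)"
    by simp
  then have "(p*dp) * y$k - Hy$k + (2*dp/p*gy) * g$k = W * (lam * (p^2 * y$k + gy * g$k))"
    using W by (simp add: field_simps)
  then have Hk: "Hy$k = (p*dp) * y$k + (2*dp/p*gy) * g$k - W * (lam * (p^2 * y$k + gy * g$k))"
    by linarith
  show "((1/W) *\<^sub>R ((P*dP) *\<^sub>R y - (q *\<^sub>R Hy + (q2*gy) *\<^sub>R g) + (2*dP/P*(q*gy)) *\<^sub>R (q *\<^sub>R g))) $ k =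
     (((p/P)*lam + (dP-dp)/(P*W)) *\<^sub>R (P^2 *\<^sub>R y + (q*gy) *\<^sub>R (q *\<^sub>R g))) $ k"
    using W p P by (simp add: Hk q q2 field_simps power2_eq_square)
qed

lemma shess_mv: "shess w u *v y = tproj u *v (ehess (hext w) u *v (tproj u *v y))"
  by (simp add: shess_def matrix_vector_mul_assoc matrix_mul_assoc)

lemma Tf_deriv:
  assumes K: "K = -1 \<or> K = 1" and r: "K = 1 \<longrightarrow> \<bar>r / 2\<bar> < pi/2"
  shows "((\<lambda>r. tK K (r / 2)) has_real_derivative (1 + K * (tK K (r / 2))\<^sup>2) / 2) (at r)"
proof -
  have d1: "((\<lambda>r. r / 2) has_real_derivative 1 / 2) (at r)"
    by (auto intro!: derivative_eq_intros)
  show ?thesis using DERIV_chain2[OF tK_deriv[OF K r] d1] by simp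
qed

lemma acoef_aux: "D1 \<noteq> 0 \<Longrightarrow> D2 \<noteq> 0 \<Longrightarrow> t \<noteq> 0 \<Longrightarrow> s \<noteq> 0 \<Longrightarrow>
   D2 / (s * D1) = (2 * t / D1) / (2 * (s * t) / (D2::real))"
  by (auto simp: divide_simps)
lemma bcoef_aux:
  fixes D1 D2 :: real
  assumes "D1 \<noteq> 0" "D2 \<noteq> 0" "t \<noteq> 0" "s \<noteq> 0" "W \<noteq> 0"
    and E: "a2 * D1 - a1 * D2 = 2 * K * t\<^sup>2 * (1 - s\<^sup>2)"
  shows "(a2 / D2 - a1 / D1) / (2 * (s * t) / D2 * W) = K * ((1 - s\<^sup>2) * t\<^sup>2) / (s * D1 * (t * W))"
proof -
  have "a2 / D2 - a1 / D1 = (a2 * D1 - a1 * D2) / (D1 * D2)"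
    using assms by (simp add: divide_simps)
  also have "\<dots> = 2 * K * t\<^sup>2 * (1 - s\<^sup>2) / (D1 * D2)" by (simp add: E)
  finally have e: "a2 / D2 - a1 / D1 = 2 * K * t\<^sup>2 * (1 - s\<^sup>2) / (D1 * D2)" .
  show ?thesis unfolding e using assms by (auto simp: divide_simps power2_eq_square)
qed

lemma pcurv_shift:
  fixes z :: "real^'n \<Rightarrow> real" and u :: "real^'n"
  assumes K: "K = -1 \<or> K = 1" and C2: "C2_sphere z"
    and zr: "\<forall>u\<in>sphere_n. 0 < z u \<and> (K = 1 \<longrightarrow> z u < pi / 2)"
    and s0: "s > 0" and sv: "\<forall>u\<in>sphere_n. K = -1 \<longrightarrow> s * tK K (z u / 2) < 1"
    and u: "u \<in> sphere_n" and lam: "lam \<in> pcurv K n z u"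
  shows "(\<lambda>i. if i < n then Acoef K s (\<lambda>u. tK K (z u / 2)) u * lam i + Bcoef K s (\<lambda>u. tK K (z u / 2)) u else 0)
           \<in> pcurv K n (zof K (\<lambda>x. s * tK K (z x / 2))) u"
proof -
  define v where "v = (\<lambda>u. tK K (z u / 2))"
  define zs where "zs = (\<lambda>x. Fs K s (z x))"
  have zs_eq: "zof K (\<lambda>x. s * tK K (z x / 2)) = zs" by (simp add: zof_def zs_def Fs_def fun_eq_iff)
  have nu: "norm u = 1" using u by (simp add: sphere_n_def)
  then have u0: "u \<noteq> 0" by auto
  have hu: "hext w u = w u" for w :: "real^'n \<Rightarrow> real" using nu by (simp add: hext_def)
  have hy: "hext z y = z (y /\<^sub>R norm y)" "y /\<^sub>R norm y \<in> sphere_n" if "y \<noteq> 0" for y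
    using that by (simp_all add: hext_def sphere_n_def)
  have rng: "0 < hext z y \<and> (K = 1 \<longrightarrow> hext z y < pi/2) \<and> (K = -1 \<longrightarrow> s * tK K (hext z y / 2) < 1)"
    if "y \<noteq> 0" for y
    using hy[OF that] zr sv by auto
  have dz: "hext z differentiable (at y)" if "y \<noteq> 0" for y using C2 that by (simp add: C2_sphere_def)
  have dg: "(\<lambda>y. egrad (hext z) y $ i) differentiable (at u)" for i using C2 u0 by (simp add: C2_sphere_def)
  have dG: "(Fs K s has_real_derivative G1 K s (hext z y)) (at (hext z y))" if "y \<noteq> 0" for y
    using G_derivs(1)[OF K] rng[OF that] s0 by blast
  have dG1: "(G1 K s has_real_derivative G2 K s (hext z u)) (at (hext z u))"
    using G_derivs(2)[OF K] rng[OF u0] s0 by blast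
  define r where "r = z u"
  define t where "t = tK K (r / 2)"
  define g where "g = sgrad z u"
  define p where "p = phi K r"
  define dp where "dp = dphi K r"
  define P where "P = phi K (Fs K s r)"
  define dP where "dP = dphi K (Fs K s r)"
  define q where "q = G1 K s r"
  define q2 where "q2 = G2 K s r"
  define W where "W = sqrt (1 + (g \<bullet> g) / p\<^sup>2)"
  have rr: "0 < r" "K = 1 \<longrightarrow> r < pi/2" "K = -1 \<longrightarrow> s * tK K (r/2) < 1"
    using rng[OF u0] by (simp_all add: hu r_def)
  note rf = range_facts[OF K rr(1,2) s0 rr(3)]
  note sc = scal_vals[OF K rr(1,2) s0 rr(3)]
  note gd = G_derivs[OF K rr(1,2) s0 rr(3)]
  have t0: "t > 0" using rf(2) by (simp add: t_def)
  have D1: "1 + K * t\<^sup>2 > 0" "1 + K * (s * t)\<^sup>2 > 0" using rf(4,5) by (simp_all add: t_def)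
  have pP: "p > 0" "P > 0" using gd(3,4) by (simp_all add: p_def P_def)
  have qe: "q = P / p" by (simp add: q_def P_def p_def G1_def)
  have q2e: "q2 = P * (dP - dp) / p\<^sup>2"
    using pP by (simp add: q2_def G2_def P_def p_def dP_def dp_def qe[unfolded q_def P_def p_def] field_simps power2_eq_square)
  have W0: "W > 0" by (simp add: W_def add_pos_nonneg)
  have sg_zs: "sgrad zs u = q *\<^sub>R g"
    unfolding sgrad_def zs_def g_def q_def r_def
    using egrad_chain[where z=z and G="Fs K s" and Gp="G1 K s", OF dz[OF u0] dG[OF u0]] by (simp add: hu)
  have eh_zs: "ehess (hext zs) u = q *\<^sub>R ehess (hext z) u + q2 *\<^sub>R outer g g"
    unfolding zs_def g_def q_def q2_def r_def sgrad_def
    using ehess_chain[where z=z and G="Fs K s" and Ga="G1 K s" and Gb="G2 K s", OF u0 dz dg dG dG1]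
    by (simp add: hu)
  have dTf: "((\<lambda>r. tK K (r / 2)) has_real_derivative (1 + K * t\<^sup>2) / 2) (at (hext z u))"
    using Tf_deriv[OF K rf(1)] by (simp add: hu t_def r_def)
  have sg_v: "sgrad v u = ((1 + K * t\<^sup>2) / 2) *\<^sub>R g"
    unfolding sgrad_def v_def g_def
    using egrad_chain[where z=z and G="\<lambda>r. tK K (r / 2)" and Gp="\<lambda>_. (1 + K * t\<^sup>2) / 2", OF dz[OF u0] dTf]
    by simp
  have gu: "g \<bullet> u = 0" unfolding g_def sgrad_def by (rule egrad_orth[OF u0 dz[OF u0]])
  have Tg: "tproj u *v g = g" using gu by (simp add: tproj_mv inner_commute)
  have sh_zs: "shess zs u *v y = q *\<^sub>R (shess z u *v y) + (q2 * (g \<bullet> y)) *\<^sub>R g" if "y \<bullet> u = 0" for y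
  proof -
    have Ty: "tproj u *v y = y" using that by (simp add: tproj_mv inner_commute)
    show ?thesis
      by (simp add: shess_mv[of zs] shess_mv[of z] Ty eh_zs matrix_vector_mult_add_rdistrib
          scaleR_matrix_vector_assoc[symmetric] outer_mv
          matrix_vector_right_distrib matrix_vector_mult_scaleR Tg)
  qed
  have zsu: "zs u = Fs K s r" by (simp add: zs_def r_def)
  have Wzs: "sqrt (1 + (sgrad zs u \<bullet> sgrad zs u) / (phi K (zs u))\<^sup>2) = W"
  proof -
    have "(sgrad zs u \<bullet> sgrad zs u) / (phi K (zs u))\<^sup>2 = (g \<bullet> g) / p\<^sup>2"
      using pP by (simp add: sg_zs zsu P_def[symmetric] qe power2_eq_square field_simps)
    then show ?thesis by (simp add: W_def)
  qed
  have Aeq: "Acoef K s v u = p / P"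
  proof -
    have "Acoef K s v u = (1 + K * (s * t)\<^sup>2) / (s * (1 + K * t\<^sup>2))"
      by (simp add: Acoef_def v_def t_def r_def power_mult_distrib mult.assoc)
    also have "\<dots> = (2 * t / (1 + K * t\<^sup>2)) / (2 * (s * t) / (1 + K * (s * t)\<^sup>2))"
      by (rule acoef_aux) (use D1 t0 s0 in auto)
    also have "\<dots> = p / P" by (simp add: p_def P_def sc(1,3) t_def)
    finally show ?thesis .
  qed
  have Wv: "Wv v u = t * W"
  proof -
    have "(norm (sgrad v u))\<^sup>2 = sgrad v u \<bullet> sgrad v u" by (rule power2_norm_eq_inner)
    then have n2: "(norm (sgrad v u))\<^sup>2 = ((1 + K * t\<^sup>2) / 2)\<^sup>2 * (g \<bullet> g)"
      by (simp add: sg_v power2_eq_square)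
    have pe: "p = 2 * t / (1 + K * t\<^sup>2)" by (simp add: p_def sc(1) t_def)
    have "(v u)\<^sup>2 + (norm (sgrad v u))\<^sup>2 = t\<^sup>2 * (1 + (g \<bullet> g) / p\<^sup>2)"
      unfolding n2 pe using t0 D1 by (simp add: v_def t_def r_def field_simps power2_eq_square)
    then have "Wv v u = sqrt (t\<^sup>2 * (1 + (g \<bullet> g) / p\<^sup>2))" by (simp add: Wv_def)
    also have "\<dots> = t * W" using t0 by (simp add: real_sqrt_mult W_def)
    finally show ?thesis .
  qed
  have Beq: "Bcoef K s v u = (dP - dp) / (P * W)"
  proof -
    have "Bcoef K s v u = K * ((1 - s\<^sup>2) * t\<^sup>2) / (s * (1 + K * t\<^sup>2) * (t * W))"
      unfolding Bcoef_def Wv by (simp add: v_def t_def r_def)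
    also have "\<dots> = ((1 - K * (s * t)\<^sup>2) / (1 + K * (s * t)\<^sup>2) - (1 - K * t\<^sup>2) / (1 + K * t\<^sup>2)) /
                      (2 * (s * t) / (1 + K * (s * t)\<^sup>2) * W)"
      by (rule bcoef_aux[symmetric]) (use D1 t0 s0 W0 in \<open>auto simp: algebra_simps power2_eq_square\<close>)
    also have "\<dots> = (dP - dp) / (P * W)"
      by (simp add: dP_def dp_def P_def sc(1-4) t_def)
    finally show ?thesis .
  qed
  from lam obtain b where b: "inj_on b {..<n}" "independent (b ` {..<n})"
    "\<forall>i<n. b i \<bullet> u = 0 \<and> sff_mat K z u *v b i = lam i *\<^sub>R (metric_mat K z u *v b i)"
    unfolding pcurv_def by blast
  have "\<forall>i<n. b i \<bullet> u = 0 \<and> sff_mat K zs u *v b i =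
          (Acoef K s v u * lam i + Bcoef K s v u) *\<^sub>R (metric_mat K zs u *v b i)"
  proof (intro allI impI conjI)
    fix i assume i: "i < n"
    define y where "y = b i"
    have yu: "y \<bullet> u = 0" using b(3) i by (simp add: y_def)
    have eq0: "(1/W) *\<^sub>R ((p*dp) *\<^sub>R y - shess z u *v y + (2*dp/p*(g \<bullet> y)) *\<^sub>R g) =
                lam i *\<^sub>R (p^2 *\<^sub>R y + (g \<bullet> y) *\<^sub>R g)"
      using b(3) i mats_mv[OF yu, of K z]
      by (simp add: y_def W_def p_def dp_def g_def r_def)
    have tr: "(1/W) *\<^sub>R ((P*dP) *\<^sub>R y - (q *\<^sub>R (shess z u *v y) + (q2*(g \<bullet> y)) *\<^sub>R g) + (2*dP/P*(q*(g \<bullet> y))) *\<^sub>R (q *\<^sub>R g)) =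
       ((p/P)*lam i + (dP-dp)/(P*W)) *\<^sub>R (P^2 *\<^sub>R y + (q*(g \<bullet> y)) *\<^sub>R (q *\<^sub>R g))"
      by (rule eig_transfer[OF eq0 W0]) (use pP qe q2e in auto)
    show "b i \<bullet> u = 0" using yu by (simp add: y_def)
    have S: "sff_mat K zs u *v y = (1/W) *\<^sub>R ((P*dP) *\<^sub>R y - (q *\<^sub>R (shess z u *v y) + (q2*(g \<bullet> y)) *\<^sub>R g)
                + (2*dP/P*(q*(g \<bullet> y))) *\<^sub>R (q *\<^sub>R g))"
      using mats_mv(2)[OF yu, of K zs, unfolded Wzs]
      unfolding zsu sh_zs[OF yu] sg_zs P_def[symmetric] dP_def[symmetric] inner_scaleR_left by simp
    have M: "metric_mat K zs u *v y = P^2 *\<^sub>R y + (q*(g \<bullet> y)) *\<^sub>R (q *\<^sub>R g)"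
      using mats_mv(1)[OF yu, of K zs] unfolding zsu sg_zs P_def[symmetric] inner_scaleR_left by simp
    show "sff_mat K zs u *v b i = (Acoef K s v u * lam i + Bcoef K s v u) *\<^sub>R (metric_mat K zs u *v b i)"
      unfolding y_def[symmetric] S M Aeq Beq by (rule tr)
  qed
  then show ?thesis
    unfolding zs_eq pcurv_def using b(1,2) by (auto simp: v_def)
qed

lemma core:
  fixes z :: "real^'n \<Rightarrow> real" and u :: "real^'n"
  assumes dim: "CARD('n) = Suc n" and mn: "m \<le> n" and K: "K = -1 \<or> K = 1" and C2: "C2_sphere z"
    and zr: "\<forall>u\<in>sphere_n. 0 < z u \<and> (K = 1 \<longrightarrow> z u < pi / 2)"
    and adm: "admissible K n m z" and s0: "s > 0"
    and sv: "\<forall>u\<in>sphere_n. s * tK K (z u / 2) < 1" and u: "u \<in> sphere_n"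
  obtains lam0 where "lam0 \<in> Gamma n m"
    "\<And>j. curvS K n j (zof K (\<lambda>u. tK K (z u / 2))) u = esym n j lam0"
    "curvS K n m (zof K (\<lambda>x. s * tK K (z x / 2))) u =
       esym n m (\<lambda>i. Acoef K s (\<lambda>u. tK K (z u / 2)) u * lam0 i + Bcoef K s (\<lambda>u. tK K (z u / 2)) u)"
    "(\<lambda>i. if i < n then Acoef K s (\<lambda>u. tK K (z u / 2)) u * lam0 i + Bcoef K s (\<lambda>u. tK K (z u / 2)) u else 0)
       \<in> pcurv K n (zof K (\<lambda>x. s * tK K (z x / 2))) u"
    "Acoef K s (\<lambda>u. tK K (z u / 2)) u > 0" "1 + K * (tK K (z u / 2))\<^sup>2 > 0"
proof -
  define v where "v = (\<lambda>u. tK K (z u / 2))"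
  have nu: "norm u = 1" using u by (simp add: sphere_n_def)
  then have u0: "u \<noteq> 0" by auto
  from adm u obtain lam0 where l0: "lam0 \<in> pcurv K n z u" "lam0 \<in> Gamma n m"
    unfolding admissible_def by blast
  have l0n: "\<And>i. i \<ge> n \<Longrightarrow> lam0 i = 0" using l0(1) by (simp add: pcurv_def)
  have sv': "\<forall>u\<in>sphere_n. K = -1 \<longrightarrow> s * tK K (z u / 2) < 1" using sv by blast
  have sv1: "\<forall>u\<in>sphere_n. K = -1 \<longrightarrow> 1 * tK K (z u / 2) < 1"
    by (simp add: tK_m1 tanh_real_lt_1)
  have zu: "0 < z u" "K = 1 \<longrightarrow> z u < pi/2" using zr u by auto
  have svu: "K = -1 \<longrightarrow> s * tK K (z u / 2) < 1" using sv u by auto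
  have sv1u: "K = -1 \<longrightarrow> 1 * tK K (z u / 2) < 1" using sv1 u by auto
  note rf = range_facts[OF K zu s0 svu]
  note rf1 = range_facts[OF K zu _ sv1u, simplified]
  note gd = G_derivs[OF K zu s0 svu]
  note gd1 = G_derivs[OF K zu _ sv1u, simplified]
  \<comment> \<open>the case s = 1 identifies the curvatures of zof K v with those of z\<close>
  have A1: "Acoef K 1 v u = 1" using rf(4) by (simp add: Acoef_def v_def)
  have B1: "Bcoef K 1 v u = 0" by (simp add: Bcoef_def)
  have "(\<lambda>i. if i < n then Acoef K 1 v u * lam0 i + Bcoef K 1 v u else 0) \<in> pcurv K n (zof K (\<lambda>x. 1 * tK K (z x / 2))) u"
    unfolding v_def by (rule pcurv_shift[OF K C2 zr _ sv1 u l0(1)]) simp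
  moreover have "(\<lambda>i. if i < n then Acoef K 1 v u * lam0 i + Bcoef K 1 v u else 0) = lam0"
    using l0n by (auto simp: A1 B1 fun_eq_iff)
  ultimately have l0': "lam0 \<in> pcurv K n (zof K v) u" by (simp add: v_def)
  have p0: "phi K (zof K v u) \<noteq> 0" using gd1(4) by (simp add: zof_def Fs_def v_def)
  have c0: "curvS K n j (zof K v) u = esym n j lam0" for j
    by (rule curvS_eq[OF dim u0 p0 l0'])
  define A where "A = Acoef K s v u"
  define B where "B = Bcoef K s v u"
  have l1: "(\<lambda>i. if i < n then A * lam0 i + B else 0) \<in> pcurv K n (zof K (\<lambda>x. s * tK K (z x / 2))) u"
    unfolding A_def B_def v_def by (rule pcurv_shift[OF K C2 zr s0 sv' u l0(1)])
  have p1: "phi K (zof K (\<lambda>x. s * tK K (z x / 2)) u) \<noteq> 0" using gd(4) by (simp add: zof_def Fs_def)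
  have "curvS K n m (zof K (\<lambda>x. s * tK K (z x / 2))) u = esym n m (\<lambda>i. if i < n then A * lam0 i + B else 0)"
    by (rule curvS_eq[OF dim u0 p1 l1])
  also have "\<dots> = esym n m (\<lambda>i. A * lam0 i + B)" by (rule esym_cong) simp
  finally have c1: "curvS K n m (zof K (\<lambda>x. s * tK K (z x / 2))) u = esym n m (\<lambda>i. A * lam0 i + B)" .
  have Apos: "A > 0" using rf(4,5) s0 by (simp add: A_def Acoef_def v_def power_mult_distrib mult.assoc)
  show ?thesis
    by (rule that[OF l0(2)]) (use c0 c1[unfolded A_def B_def v_def] l1[unfolded A_def B_def v_def] Apos[unfolded A_def v_def] rf(4) in \<open>simp_all add: v_def\<close>)
qed

lemma sum_split:
  fixes f :: "nat \<Rightarrow> real"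
  assumes "m \<le> n"
  shows "esym n m (\<lambda>i. A * f i + B) = A ^ m * esym n m f +
     (\<Sum>j<m. real ((n - j) choose (m - j)) * A ^ j * B ^ (m - j) * esym n j f)"
proof -
  have "{..m} = insert m {..<m}" by auto
  then show ?thesis using esym_shift[of n m A f B] by simp
qed

theorem lemma2p1:
  fixes n m :: nat
  assumes dim: "CARD('n) = Suc n"
    and m: "1 \<le> m" "m \<le> n"
  shows
   "(\<exists>c :: nat \<Rightarrow> real. (\<forall>j<m. c j > 0) \<and>
      (\<forall>K (z :: real^'n \<Rightarrow> real) s.
         (K = -1 \<or> K = 1) \<and> C2_sphere z \<and>
         (\<forall>u\<in>sphere_n. 0 < z u \<and> (K = 1 \<longrightarrow> z u < pi / 2)) \<and>
         admissible K n m z \<and> s > 0 \<and>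
         (\<forall>u\<in>sphere_n. s * tK K (z u / 2) < 1)
         \<longrightarrow> (let v = (\<lambda>u. tK K (z u / 2)) in
              \<forall>u\<in>sphere_n.
                curvS K n m (zof K (\<lambda>x. s * v x)) u =
                  (Acoef K s v u) ^ m * curvS K n m (zof K v) u +
                  (\<Sum>j<m. c j * (Acoef K s v u) ^ j * (Bcoef K s v u) ^ (m - j)
                              * curvS K n j (zof K v) u)))) \<and>
    (\<forall>K (z :: real^'n \<Rightarrow> real) s.
         (K = -1 \<or> K = 1) \<and> C2_sphere z \<and>
         (\<forall>u\<in>sphere_n. 0 < z u \<and> (K = 1 \<longrightarrow> z u < pi / 2)) \<and>
         admissible K n m z \<and> s > 0 \<and>
         (\<forall>u\<in>sphere_n. s * tK K (z u / 2) < 1) \<and>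
         ((K = -1 \<and> s \<ge> 1) \<or> (K = 1 \<and> s \<le> 1))
         \<longrightarrow> (let v = (\<lambda>u. tK K (z u / 2)) in
              (\<forall>u\<in>sphere_n.
                 curvS K n m (zof K (\<lambda>x. s * v x)) u \<ge>
                   (Acoef K s v u) ^ m * curvS K n m (zof K v) u) \<and>
              admissible K n m (zof K (\<lambda>x. s * v x))))"
proof -
  define c where "c j = real ((n - j) choose (m - j))" for j
  have cpos: "\<forall>j<m. c j > 0" using m by (auto simp: c_def)
  show ?thesis
  proof (intro conjI)
    show "\<exists>c :: nat \<Rightarrow> real. (\<forall>j<m. c j > 0) \<and>
      (\<forall>K (z :: real^'n \<Rightarrow> real) s.
         (K = -1 \<or> K = 1) \<and> C2_sphere z \<and>
         (\<forall>u\<in>sphere_n. 0 < z u \<and> (K = 1 \<longrightarrow> z u < pi / 2)) \<and>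
         admissible K n m z \<and> s > 0 \<and>
         (\<forall>u\<in>sphere_n. s * tK K (z u / 2) < 1)
         \<longrightarrow> (let v = (\<lambda>u. tK K (z u / 2)) in
              \<forall>u\<in>sphere_n.
                curvS K n m (zof K (\<lambda>x. s * v x)) u =
                  (Acoef K s v u) ^ m * curvS K n m (zof K v) u +
                  (\<Sum>j<m. c j * (Acoef K s v u) ^ j * (Bcoef K s v u) ^ (m - j)
                              * curvS K n j (zof K v) u)))"
    proof (rule exI[of _ c], intro conjI)
      show "\<forall>j<m. c j > 0" by (rule cpos)
    next
      show "\<forall>K (z :: real^'n \<Rightarrow> real) s.
         (K = -1 \<or> K = 1) \<and> C2_sphere z \<and>
         (\<forall>u\<in>sphere_n. 0 < z u \<and> (K = 1 \<longrightarrow> z u < pi / 2)) \<and>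
         admissible K n m z \<and> s > 0 \<and>
         (\<forall>u\<in>sphere_n. s * tK K (z u / 2) < 1)
         \<longrightarrow> (let v = (\<lambda>u. tK K (z u / 2)) in
              \<forall>u\<in>sphere_n.
                curvS K n m (zof K (\<lambda>x. s * v x)) u =
                  (Acoef K s v u) ^ m * curvS K n m (zof K v) u +
                  (\<Sum>j<m. c j * (Acoef K s v u) ^ j * (Bcoef K s v u) ^ (m - j)
                              * curvS K n j (zof K v) u))"
      proof (intro allI impI)
      fix K s and z :: "real^'n \<Rightarrow> real"
      assume H: "(K = -1 \<or> K = 1) \<and> C2_sphere z \<and>
         (\<forall>u\<in>sphere_n. 0 < z u \<and> (K = 1 \<longrightarrow> z u < pi / 2)) \<and>
         admissible K n m z \<and> s > 0 \<and> (\<forall>u\<in>sphere_n. s * tK K (z u / 2) < 1)"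
      show "let v = (\<lambda>u. tK K (z u / 2)) in
              \<forall>u\<in>sphere_n.
                curvS K n m (zof K (\<lambda>x. s * v x)) u =
                  (Acoef K s v u) ^ m * curvS K n m (zof K v) u +
                  (\<Sum>j<m. c j * (Acoef K s v u) ^ j * (Bcoef K s v u) ^ (m - j)
                              * curvS K n j (zof K v) u)"
        unfolding Let_def
      proof
        fix u :: "real^'n" assume u: "u \<in> sphere_n"
        obtain lam0 where L: "lam0 \<in> Gamma n m"
          "\<And>j. curvS K n j (zof K (\<lambda>u. tK K (z u / 2))) u = esym n j lam0"
          "curvS K n m (zof K (\<lambda>x. s * tK K (z x / 2))) u =
             esym n m (\<lambda>i. Acoef K s (\<lambda>u. tK K (z u / 2)) u * lam0 i + Bcoef K s (\<lambda>u. tK K (z u / 2)) u)"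
          by (rule core[OF dim m(2) _ _ _ _ _ _ u]) (use H in auto)
        show "curvS K n m (zof K (\<lambda>x. s * tK K (z x / 2))) u =
          Acoef K s (\<lambda>u. tK K (z u / 2)) u ^ m * curvS K n m (zof K (\<lambda>u. tK K (z u / 2))) u +
          (\<Sum>j<m. c j * Acoef K s (\<lambda>u. tK K (z u / 2)) u ^ j * Bcoef K s (\<lambda>u. tK K (z u / 2)) u ^ (m - j) *
               curvS K n j (zof K (\<lambda>u. tK K (z u / 2))) u)"
          unfolding L(2,3) sum_split[OF m(2)] c_def by simp
      qed
      qed
    qed
  next
    show "\<forall>K (z :: real^'n \<Rightarrow> real) s.
         (K = -1 \<or> K = 1) \<and> C2_sphere z \<and>
         (\<forall>u\<in>sphere_n. 0 < z u \<and> (K = 1 \<longrightarrow> z u < pi / 2)) \<and>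
         admissible K n m z \<and> s > 0 \<and>
         (\<forall>u\<in>sphere_n. s * tK K (z u / 2) < 1) \<and>
         ((K = -1 \<and> s \<ge> 1) \<or> (K = 1 \<and> s \<le> 1))
         \<longrightarrow> (let v = (\<lambda>u. tK K (z u / 2)) in
              (\<forall>u\<in>sphere_n.
                 curvS K n m (zof K (\<lambda>x. s * v x)) u \<ge>
                   (Acoef K s v u) ^ m * curvS K n m (zof K v) u) \<and>
              admissible K n m (zof K (\<lambda>x. s * v x)))"
    proof (intro allI impI)
      fix K s and z :: "real^'n \<Rightarrow> real"
      assume H: "(K = -1 \<or> K = 1) \<and> C2_sphere z \<and>
         (\<forall>u\<in>sphere_n. 0 < z u \<and> (K = 1 \<longrightarrow> z u < pi / 2)) \<and>
         admissible K n m z \<and> s > 0 \<and>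
         (\<forall>u\<in>sphere_n. s * tK K (z u / 2) < 1) \<and>
         ((K = -1 \<and> s \<ge> 1) \<or> (K = 1 \<and> s \<le> 1))"
      define v where "v = (\<lambda>u. tK K (z u / 2))"
      have Bnn: "Bcoef K s v u \<ge> 0" if "1 + K * (tK K (z u / 2))\<^sup>2 > 0" for u
      proof -
        have "K * ((1 - s\<^sup>2) * (v u)\<^sup>2) \<ge> 0"
        proof (cases "K = -1")
          case True
          then have "s\<^sup>2 \<ge> 1" using H by (simp add: one_le_power)
          then show ?thesis using True by (simp add: mult_nonpos_nonneg)
        next
          case False
          then have "K = 1" "s \<le> 1" using H by auto
          moreover have "s\<^sup>2 \<le> 1" using \<open>s \<le> 1\<close> H by (simp add: power_le_one)
          ultimately show ?thesis by simp
        qed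
        moreover have "s * (1 + K * (v u)\<^sup>2) * Wv v u \<ge> 0"
          using that H by (simp add: v_def Wv_def)
        ultimately show ?thesis unfolding Bcoef_def by (rule divide_nonneg_nonneg)
      qed
      have part: "curvS K n m (zof K (\<lambda>x. s * v x)) u \<ge> (Acoef K s v u) ^ m * curvS K n m (zof K v) u \<and>
            (\<exists>lam\<in>pcurv K n (zof K (\<lambda>x. s * v x)) u. lam \<in> Gamma n m)" if u: "u \<in> sphere_n" for u
      proof -
        obtain lam0 where L: "lam0 \<in> Gamma n m"
          "\<And>j. curvS K n j (zof K (\<lambda>u. tK K (z u / 2))) u = esym n j lam0"
          "curvS K n m (zof K (\<lambda>x. s * tK K (z x / 2))) u =
             esym n m (\<lambda>i. Acoef K s (\<lambda>u. tK K (z u / 2)) u * lam0 i + Bcoef K s (\<lambda>u. tK K (z u / 2)) u)"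
          "(\<lambda>i. if i < n then Acoef K s (\<lambda>u. tK K (z u / 2)) u * lam0 i + Bcoef K s (\<lambda>u. tK K (z u / 2)) u else 0)
             \<in> pcurv K n (zof K (\<lambda>x. s * tK K (z x / 2))) u"
          "Acoef K s (\<lambda>u. tK K (z u / 2)) u > 0" "1 + K * (tK K (z u / 2))\<^sup>2 > 0"
          by (rule core[OF dim m(2) _ _ _ _ _ _ u]) (use H in auto)
        define A where "A = Acoef K s v u"
        define B where "B = Bcoef K s v u"
        have A0: "A > 0" using L(5) by (simp add: A_def v_def)
        have B0: "B \<ge> 0" using Bnn[OF L(6)] by (simp add: B_def)
        have S: "esym n j lam0 > 0" if "j \<le> m" for j by (rule gamma_pos[OF L(1) m(2) that])
        have "curvS K n m (zof K (\<lambda>x. s * v x)) u = A ^ m * esym n m lam0 +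
           (\<Sum>j<m. real ((n - j) choose (m - j)) * A ^ j * B ^ (m - j) * esym n j lam0)"
          using L(3) sum_split[OF m(2)] by (simp add: A_def B_def v_def)
        moreover have "(\<Sum>j<m. real ((n - j) choose (m - j)) * A ^ j * B ^ (m - j) * esym n j lam0) \<ge> 0"
        proof (rule sum_nonneg)
          fix j assume "j \<in> {..<m}"
          then have "esym n j lam0 > 0" using S by auto
          then show "0 \<le> real ((n - j) choose (m - j)) * A ^ j * B ^ (m - j) * esym n j lam0"
            using A0 B0 by (intro mult_nonneg_nonneg) (simp_all add: less_imp_le)
        qed
        moreover have "curvS K n m (zof K v) u = esym n m lam0" using L(2) by (simp add: v_def)
        ultimately have ineq: "curvS K n m (zof K (\<lambda>x. s * v x)) u \<ge> A ^ m * curvS K n m (zof K v) u"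
          by simp
        have G: "(\<lambda>i. if i < n then A * lam0 i + B else 0) \<in> Gamma n m"
          by (rule gamma_shift[OF L(1) m(2) A0 B0])
        show ?thesis using ineq[unfolded A_def] L(4) G[unfolded A_def B_def v_def] by (auto simp: v_def)
      qed
      show "let v = (\<lambda>u. tK K (z u / 2)) in
              (\<forall>u\<in>sphere_n.
                 curvS K n m (zof K (\<lambda>x. s * v x)) u \<ge>
                   (Acoef K s v u) ^ m * curvS K n m (zof K v) u) \<and>
              admissible K n m (zof K (\<lambda>x. s * v x))"
        unfolding Let_def v_def[symmetric] admissible_def using part by blast
    qed
  qed
qed

end
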